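(* For $x\in(0,1)$ let $B(x)=B(x,1-x)$ and $R(x)=R(x,1-x)$. Then (1) the function $f(x)=\big(1+x(1-x)-(x(1-x))^2\big)B(x)-R(x)$ is strictly completely monotonic on $(0,1/2)$; (2) the function $g(x)=R(x)-\dfrac{B(x)}{1+x(1-x)}$ is strictly completely monotonic on $(0,1/2)$.
   Context: $B(x,y)=\Gamma(x)\Gamma(y)/\Gamma(x+y)$, $\psi=\Gamma'/\Gamma$, $\gamma=-\psi(1)$, $R(a,b)=-2\gamma-\psi(a)-\psi(b)$. A function $f$ on an interval $I$ is strictly completely monotonic if $(-1)^nf^{(n)}(x)>0$ for all $n\ge0$ and $x\in I$. *)

theory Defs
  imports "HOL-Analysis.Analysis"
begin

definition RR :: "real \<Rightarrow> real \<Rightarrow> real" where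
  "RR a b = - 2 * euler_mascheroni - Digamma a - Digamma b"

definition strictly_completely_monotonic_on :: "real set \<Rightarrow> (real \<Rightarrow> real) \<Rightarrow> bool" where
  "strictly_completely_monotonic_on I f \<longleftrightarrow>
     (\<forall>n. \<forall>x\<in>I. ((deriv ^^ n) f has_real_derivative (deriv ^^ Suc n) f x) (at x)) \<and>
     (\<forall>n. \<forall>x\<in>I. (-1) ^ n * (deriv ^^ n) f x > 0)"

end

theory Submission
  imports Defs
begin

definition ph :: "real \<Rightarrow> real \<Rightarrow> real" where "ph a t = 1/(a-t) + 1/(a+t)"
definition phi :: "nat \<Rightarrow> real \<Rightarrow> real \<Rightarrow> real" where
  "phi r a t = fact r * (1/(a-t)^(Suc r) + (-1)^r/(a+t)^(Suc r))"

lemma phi_0: "phi 0 a t = ph a t" by (simp add: phi_def ph_def)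

lemma inv_pow_deriv:
  assumes "c + s * t \<noteq> 0"
  shows "((\<lambda>t. 1/(c + s*t)^(Suc r)) has_real_derivative (- s * real (Suc r) / (c + s*t)^(Suc (Suc r)))) (at t)"
proof -
  have d0: "((\<lambda>t. (c + s*t)^(Suc r)) has_real_derivative (1 + real r) * (s * (c+s*t)^r)) (at t)"
    by (intro DERIV_power_Suc) (auto intro!: derivative_eq_intros)
  have d: "((\<lambda>t. (c + s*t)^(Suc r)) has_real_derivative real (Suc r) * (c+s*t)^r * s) (at t)"
    using d0 by (simp add: algebra_simps)
  have "((\<lambda>t. inverse ((c + s*t)^(Suc r))) has_real_derivative
          - ((real (Suc r) * (c+s*t)^r * s) * inverse (((c + s*t)^(Suc r))^Suc (Suc 0)))) (at t)"
    by (rule DERIV_inverse_fun[OF d]) (use assms in simp)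
  moreover have "- ((real (Suc r) * (c+s*t)^r * s) * inverse (((c + s*t)^(Suc r))^Suc (Suc 0)))
      = - s * real (Suc r) / (c + s*t)^(Suc (Suc r))"
  proof -
    define y where "y = c + s*t"
    have y: "y \<noteq> 0" using assms y_def by simp
    have "((y)^(Suc r))^Suc (Suc 0) = y^r * y^(Suc (Suc r))"
      by (simp flip: power_mult power_add add: mult_2_right)
    then show ?thesis using y unfolding y_def[symmetric]
      by (simp add: field_simps)
  qed
  moreover have "(\<lambda>t. 1/(c + s*t)^(Suc r)) = (\<lambda>t. inverse ((c + s*t)^(Suc r)))"
    by (simp only: inverse_eq_divide)
  ultimately show ?thesis by (metis (no_types, lifting) DERIV_cong)
qed

lemma phi_deriv:
  assumes "t \<noteq> a" "t \<noteq> -a"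
  shows "(phi r a has_real_derivative phi (Suc r) a t) (at t)"
proof -
  have 1: "((\<lambda>t. 1/(a + (-1)*t)^(Suc r)) has_real_derivative (- (-1) * real (Suc r) / (a + (-1)*t)^(Suc (Suc r)))) (at t)"
    by (rule inv_pow_deriv) (use assms in auto)
  have 2: "((\<lambda>t. 1/(a + 1*t)^(Suc r)) has_real_derivative (- 1 * real (Suc r) / (a + 1*t)^(Suc (Suc r)))) (at t)"
    by (rule inv_pow_deriv) (use assms in auto)
  have "((\<lambda>t. fact r * (1/(a + (-1)*t)^(Suc r) + (-1)^r * (1/(a + 1*t)^(Suc r)))) has_real_derivative
      fact r * ((- (-1) * real (Suc r) / (a + (-1)*t)^(Suc (Suc r))) + (-1)^r * (- 1 * real (Suc r) / (a + 1*t)^(Suc (Suc r))))) (at t)"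
    by (intro DERIV_cmult DERIV_add 1 2)
  moreover have "phi r a = (\<lambda>t. fact r * (1/(a + (-1)*t)^(Suc r) + (-1)^r * (1/(a + 1*t)^(Suc r))))"
    by (simp add: phi_def fun_eq_iff)
  moreover have "fact r * ((- (-1) * real (Suc r) / (a + (-1)*t)^(Suc (Suc r))) + (-1)^r * (- 1 * real (Suc r) / (a + 1*t)^(Suc (Suc r))))
     = phi (Suc r) a t"
  proof -
    have g: "fact r * (real (Suc r) * X + (-1)^r * (- 1 * real (Suc r) * Y)) = fact (Suc r) * (X + (-1)^(Suc r) * Y)"
      for X Y :: real
      by (simp add: fact_Suc algebra_simps)
    show ?thesis using g[of "1/(a-t)^Suc (Suc r)" "1/(a+t)^Suc (Suc r)"] by (simp add: phi_def)
  qed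
  ultimately show ?thesis by (metis (no_types, lifting) DERIV_cong)
qed

lemma phi_pos:
  assumes "0 < t" "t < a"
  shows "phi r a t > 0"
proof -
  have X: "0 < a - t" using assms by simp
  have XY: "a - t < a + t" using assms by simp
  have "(a-t)^Suc r < (a+t)^Suc r" using X XY by (intro power_strict_mono) auto
  hence "inverse ((a+t)^Suc r) < inverse ((a-t)^Suc r)"
    using X by (intro less_imp_inverse_less) auto
  hence lt: "1/(a+t)^Suc r < 1/(a-t)^Suc r" by (simp only: inverse_eq_divide)
  have "\<bar>(-1)^r/(a+t)^Suc r\<bar> = 1/(a+t)^Suc r" using assms by (simp add: abs_divide)
  hence "(-1)^r/(a+t)^Suc r \<ge> - (1/(a+t)^Suc r)" by linarith
  hence "1/(a-t)^Suc r + (-1)^r/(a+t)^Suc r > 0" using lt by linarith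
  thus ?thesis unfolding phi_def by simp
qed

lemma phi_nonneg:
  assumes "0 \<le> t" "t < a"
  shows "phi r a t \<ge> 0"
proof -
  have X: "0 < a - t" using assms by simp
  have XY: "a - t \<le> a + t" using assms by simp
  have "(a-t)^Suc r \<le> (a+t)^Suc r" using X XY by (intro power_mono) auto
  hence "inverse ((a+t)^Suc r) \<le> inverse ((a-t)^Suc r)"
    using X by (intro le_imp_inverse_le) auto
  hence lt: "1/(a+t)^Suc r \<le> 1/(a-t)^Suc r" by (simp only: inverse_eq_divide)
  have "\<bar>(-1)^r/(a+t)^Suc r\<bar> = 1/(a+t)^Suc r" using assms by (simp add: abs_divide)
  hence "(-1)^r/(a+t)^Suc r \<ge> - (1/(a+t)^Suc r)" by linarith
  hence "1/(a-t)^Suc r + (-1)^r/(a+t)^Suc r \<ge> 0" using lt by linarith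
  thus ?thesis unfolding phi_def by simp
qed

lemma phi_mono:
  assumes t: "0 \<le> t" "t < a" and ab: "a \<le> b"
  shows "b * phi r b t \<le> a * phi r a t"
proof -
  define h where "h c = fact r * (c * (1/(-t + 1*c)^Suc r) + (-1)^r * (c * (1/(t + 1*c)^Suc r)))" for c
  have "h b \<le> h a"
  proof (rule DERIV_nonpos_imp_nonincreasing[OF ab])
    fix c assume c: "a \<le> c" "c \<le> b"
    have X: "0 < c - t" and Y: "0 < c + t" and XY: "c - t \<le> c + t" using c t by auto
    have d1: "((\<lambda>c. 1/(-t + 1*c)^(Suc r)) has_real_derivative (- 1 * real (Suc r) / (-t + 1*c)^(Suc (Suc r)))) (at c)"
      by (rule inv_pow_deriv) (use X in auto)
    have d2: "((\<lambda>c. 1/(t + 1*c)^(Suc r)) has_real_derivative (- 1 * real (Suc r) / (t + 1*c)^(Suc (Suc r)))) (at c)"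
      by (rule inv_pow_deriv) (use Y in auto)
    define D where "D = fact r * ((c * (- 1 * real (Suc r) / (-t + 1*c)^(Suc (Suc r))) + 1 * (1/(-t + 1*c)^Suc r))
       + (-1)^r * (c * (- 1 * real (Suc r) / (t + 1*c)^(Suc (Suc r))) + 1 * (1/(t + 1*c)^Suc r)))"
    have "(h has_real_derivative D) (at c)"
      unfolding h_def D_def
      by (intro DERIV_cmult DERIV_add DERIV_mult' DERIV_ident d1 d2)
    moreover have "D \<le> 0"
    proof -
      define X where "X = c - t"
      define Y where "Y = c + t"
      have aux: "c * (- 1 * real (Suc r) / Z^(Suc (Suc r))) + 1 * (1/Z^Suc r)
          = (Z - real (Suc r) * c) / Z^(Suc (Suc r))" if "Z \<noteq> 0" for Z
      proof -
        have h1: "1/Z^Suc r = Z / Z^(Suc (Suc r))" using that by simp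
        have h2: "c * (- 1 * k / W) + 1 * (Z / W) = (Z - k * c) / W" for k W :: real
          by (simp add: diff_divide_distrib)
        show ?thesis unfolding h1 by (rule h2)
      qed
      have e1: "c * (- 1 * real (Suc r) / (-t + 1*c)^(Suc (Suc r))) + 1 * (1/(-t + 1*c)^Suc r)
          = - (real r * c + t) / X^(Suc (Suc r))"
        using aux[of X] X unfolding X_def by (simp add: algebra_simps)
      have e2: "c * (- 1 * real (Suc r) / (t + 1*c)^(Suc (Suc r))) + 1 * (1/(t + 1*c)^Suc r)
          = - (real r * c - t) / Y^(Suc (Suc r))"
        using aux[of Y] Y unfolding Y_def by (simp add: algebra_simps)
      have "X^(Suc (Suc r)) \<le> Y^(Suc (Suc r))" using X XY unfolding X_def Y_def by (intro power_mono) auto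
      moreover have "0 < X^(Suc (Suc r))" using X unfolding X_def by simp
      ultimately have q: "\<bar>real r * c - t\<bar> / Y^(Suc (Suc r)) \<le> (real r * c + t) / X^(Suc (Suc r))"
      proof -
        assume A: "X^(Suc (Suc r)) \<le> Y^(Suc (Suc r))" and B: "0 < X^(Suc (Suc r))"
        have "\<bar>real r * c - t\<bar> \<le> real r * c + t" using c t by (auto simp: abs_if)
        hence "\<bar>real r * c - t\<bar> / Y^(Suc (Suc r)) \<le> (real r * c + t) / Y^(Suc (Suc r))"
          using A B by (intro divide_right_mono) auto
        also have "\<dots> \<le> (real r * c + t) / X^(Suc (Suc r))"
          using A B c t by (intro divide_left_mono) auto
        finally show ?thesis .
      qed
      have ab: "\<bar>(-1)^r * (- (real r * c - t) / Y^(Suc (Suc r)))\<bar> = \<bar>real r * c - t\<bar> / Y^(Suc (Suc r))"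
        using Y unfolding Y_def by (simp add: abs_mult abs_divide abs_minus_commute)
      have "(-1)^r * (- (real r * c - t) / Y^(Suc (Suc r))) \<le> \<bar>(-1)^r * (- (real r * c - t) / Y^(Suc (Suc r)))\<bar>"
        by (rule abs_ge_self)
      also have "\<dots> = \<bar>real r * c - t\<bar> / Y^(Suc (Suc r))" by (rule ab)
      also have "\<dots> \<le> (real r * c + t) / X^(Suc (Suc r))" by (rule q)
      finally have "(-1)^r * (- (real r * c - t) / Y^(Suc (Suc r))) \<le> (real r * c + t) / X^(Suc (Suc r))" .
      hence "- (real r * c + t) / X^(Suc (Suc r)) + (-1)^r * (- (real r * c - t) / Y^(Suc (Suc r))) \<le> 0"
        unfolding minus_divide_left by linarith
      hence "fact r * (- (real r * c + t) / X^(Suc (Suc r)) + (-1)^r * (- (real r * c - t) / Y^(Suc (Suc r)))) \<le> 0"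
        by (simp add: mult_nonneg_nonpos)
      thus ?thesis unfolding D_def e1 e2 .
    qed
    ultimately show "\<exists>y. (h has_real_derivative y) (at c) \<and> y \<le> 0" by blast
  qed
  moreover have "h c = c * phi r c t" for c unfolding h_def phi_def by (simp add: algebra_simps)
  ultimately show ?thesis by simp
qed

definition dpow :: "nat \<Rightarrow> nat \<Rightarrow> real \<Rightarrow> real" where
  "dpow k l t = (\<Prod>j<l. real (k - j)) * t^(k - l)"

lemma dpow_deriv: "(dpow k l has_real_derivative dpow k (Suc l) t) (at t)"
proof -
  have "((\<lambda>t. (\<Prod>j<l. real (k - j)) * t^(k - l)) has_real_derivative
          (\<Prod>j<l. real (k - j)) * (real (k - l) * t^(k - l - Suc 0))) (at t)"
    by (intro DERIV_cmult DERIV_pow)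
  moreover have "(\<Prod>j<l. real (k - j)) * (real (k - l) * t^(k - l - Suc 0)) = dpow k (Suc l) t"
    by (simp add: dpow_def)
  ultimately show ?thesis unfolding dpow_def[abs_def] by (simp add: mult.assoc)
qed

lemma dpow_nonneg: "0 \<le> t \<Longrightarrow> 0 \<le> dpow k l t"
  by (simp add: dpow_def prod_nonneg)

lemma dpow_0 [simp]: "dpow k 0 t = t^k" by (simp add: dpow_def)

lemma leibniz_sum_eq:
  fixes u v :: "nat \<Rightarrow> real"
  shows "(\<Sum>l\<le>n. real (n choose l) * (u (Suc l) * v (n - l) + u l * v (Suc (n - l))))
       = (\<Sum>l\<le>Suc n. real (Suc n choose l) * u l * v (Suc n - l))"
proof -
  have A: "(\<Sum>l\<le>Suc n. real (Suc n choose l) * u l * v (Suc n - l))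
      = u 0 * v (Suc n) + (\<Sum>l\<le>n. real (Suc n choose Suc l) * u (Suc l) * v (n - l))"
    by (subst sum.atMost_Suc_shift) simp
  also have "(\<Sum>l\<le>n. real (Suc n choose Suc l) * u (Suc l) * v (n - l))
      = (\<Sum>l\<le>n. real (n choose l) * u (Suc l) * v (n - l)) + (\<Sum>l\<le>n. real (n choose Suc l) * u (Suc l) * v (n - l))"
    by (simp add: algebra_simps sum.distrib)
  finally have A': "(\<Sum>l\<le>Suc n. real (Suc n choose l) * u l * v (Suc n - l))
      = u 0 * v (Suc n) + (\<Sum>l\<le>n. real (n choose l) * u (Suc l) * v (n - l)) + (\<Sum>l\<le>n. real (n choose Suc l) * u (Suc l) * v (n - l))"
    by simp
  have B: "(\<Sum>l\<le>n. real (n choose l) * u l * v (Suc (n - l)))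
      = u 0 * v (Suc n) + (\<Sum>l\<le>n. real (n choose Suc l) * u (Suc l) * v (n - l))"
  proof (cases n)
    case 0 then show ?thesis by simp
  next
    case (Suc m)
    have "(\<Sum>l\<le>n. real (n choose l) * u l * v (Suc (n - l)))
        = u 0 * v (Suc n) + (\<Sum>l\<le>m. real (n choose Suc l) * u (Suc l) * v (Suc (n - Suc l)))"
      unfolding Suc by (subst sum.atMost_Suc_shift) simp
    also have "(\<Sum>l\<le>m. real (n choose Suc l) * u (Suc l) * v (Suc (n - Suc l)))
        = (\<Sum>l\<le>m. real (n choose Suc l) * u (Suc l) * v (n - l))"
      by (intro sum.cong) (auto simp: Suc Suc_diff_le)
    also have "\<dots> = (\<Sum>l\<le>n. real (n choose Suc l) * u (Suc l) * v (n - l))"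
      unfolding Suc by (subst sum.atMost_Suc) (simp add: binomial_eq_0)
    finally show ?thesis .
  qed
  have "(\<Sum>l\<le>n. real (n choose l) * (u (Suc l) * v (n - l) + u l * v (Suc (n - l))))
      = (\<Sum>l\<le>n. real (n choose l) * u (Suc l) * v (n - l)) + (\<Sum>l\<le>n. real (n choose l) * u l * v (Suc (n - l)))"
    by (simp add: algebra_simps sum.distrib)
  then show ?thesis using A' B by simp
qed

lemma leibniz_deriv:
  assumes du: "\<And>l. (u l has_real_derivative u (Suc l) t) (at t)"
      and dv: "\<And>l. (v l has_real_derivative v (Suc l) t) (at t)"
  shows "((\<lambda>t. \<Sum>l\<le>n. real (n choose l) * u l t * v (n - l) t) has_real_derivative
          (\<Sum>l\<le>Suc n. real (Suc n choose l) * u l t * v (Suc n - l) t)) (at t)"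
proof -
  have "((\<lambda>t. \<Sum>l\<le>n. real (n choose l) * (u l t * v (n - l) t)) has_real_derivative
          (\<Sum>l\<le>n. real (n choose l) * (u l t * v (Suc (n - l)) t + u (Suc l) t * v (n - l) t))) (at t)"
    by (intro DERIV_sum DERIV_cmult DERIV_mult' du dv)
  moreover have "(\<Sum>l\<le>n. real (n choose l) * (u l t * v (Suc (n - l)) t + u (Suc l) t * v (n - l) t))
     = (\<Sum>l\<le>Suc n. real (Suc n choose l) * u l t * v (Suc n - l) t)"
    using leibniz_sum_eq[of n "\<lambda>l. u l t" "\<lambda>l. v l t"] by (simp add: algebra_simps)
  ultimately show ?thesis by (simp add: mult.assoc)
qed

lemma series_deriv_all:
  fixes u :: "nat \<Rightarrow> nat \<Rightarrow> real \<Rightarrow> real"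
  assumes der: "\<And>i r t. \<bar>t\<bar> < R \<Longrightarrow> (u i r has_real_derivative u i (Suc r) t) (at t)"
      and bnd: "\<And>r \<rho>. 0 < r \<Longrightarrow> \<rho> < R \<Longrightarrow> \<exists>M. summable M \<and> (\<forall>i t. \<bar>t\<bar> \<le> \<rho> \<longrightarrow> \<bar>u i r t\<bar> \<le> M i)"
      and tz: "\<bar>tz\<bar> < R" "summable (\<lambda>i. u i 0 tz)"
      and t: "\<bar>t\<bar> < R"
  shows "summable (\<lambda>i. u i r t) \<and> ((\<lambda>t. \<Sum>i. u i r t) has_real_derivative (\<Sum>i. u i (Suc r) t)) (at t)"
proof -
  define \<rho> where "\<rho> = (max \<bar>t\<bar> \<bar>tz\<bar> + R) / 2"
  have \<rho>: "\<rho> < R" "\<bar>t\<bar> < \<rho>" "\<bar>tz\<bar> < \<rho>" using t tz unfolding \<rho>_def by auto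
  define S where "S = {-\<rho>..\<rho>}"
  have tS: "t \<in> interior S" using \<rho> unfolding S_def by auto
  have t0S: "tz \<in> S" using \<rho> unfolding S_def by auto
  have sumr: "summable (\<lambda>i. u i r x)" if r0: "0 < r" and xS: "x \<in> S" for r x
  proof -
    obtain M where M: "summable M" "\<And>i t. \<bar>t\<bar> \<le> \<rho> \<Longrightarrow> \<bar>u i r t\<bar> \<le> M i"
      using bnd[OF r0 \<rho>(1)] by blast
    show ?thesis
      by (rule summable_comparison_test[OF _ M(1)]) (use M(2) xS in \<open>auto simp: S_def\<close>)
  qed
  have uc: "uniformly_convergent_on S (\<lambda>n x. \<Sum>i<n. u i (Suc r) x)"
  proof -
    obtain M where M: "summable M" "\<And>i t. \<bar>t\<bar> \<le> \<rho> \<Longrightarrow> \<bar>u i (Suc r) t\<bar> \<le> M i"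
      using bnd[of "Suc r" \<rho>] \<rho>(1) by blast
    show ?thesis
      by (rule Weierstrass_m_test'[OF _ M(1)]) (use M(2) in \<open>auto simp: S_def\<close>)
  qed
  have dS: "(u i r has_field_derivative u i (Suc r) x) (at x within S)" if "x \<in> S" for i x
    by (rule has_field_derivative_at_within, rule der) (use that \<rho> in \<open>auto simp: S_def\<close>)
  have x0: "\<exists>x0\<in>S. summable (\<lambda>i. u i r x0)"
  proof (cases "r = 0")
    case True then show ?thesis using t0S tz by auto
  next
    case False then show ?thesis using sumr[of r tz] t0S by auto
  qed
  then obtain x0 where x0: "x0 \<in> S" "summable (\<lambda>i. u i r x0)" by blast
  have cS: "convex S" unfolding S_def by simp
  from has_field_derivative_series'[OF cS dS uc x0 tS]
  show ?thesis by simp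
qed

lemma CM_from_formula:
  fixes f :: "real \<Rightarrow> real" and Fd :: "nat \<Rightarrow> real \<Rightarrow> real"
  assumes eq: "\<And>x. 0 < x \<Longrightarrow> x < 1 \<Longrightarrow> f x = Fd 0 (1/2 - x)"
      and der: "\<And>n t. \<bar>t\<bar> < 1/2 \<Longrightarrow> (Fd n has_real_derivative Fd (Suc n) t) (at t)"
      and pos: "\<And>n t. 0 < t \<Longrightarrow> t < 1/2 \<Longrightarrow> Fd n t > 0"
  shows "strictly_completely_monotonic_on {0<..<1/2} f"
proof -
  define D where "D n x = (-1)^n * Fd n (1/2 - x)" for n x
  have dD: "(D n has_real_derivative D (Suc n) x) (at x)" if "0 < x" "x < 1" for n x
  proof -
    have "((\<lambda>x. Fd n (1/2 - x)) has_real_derivative Fd (Suc n) (1/2 - x) * (0 - 1)) (at x)"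
      by (rule DERIV_chain2[of "Fd n"], rule der) (use that in \<open>auto intro!: derivative_eq_intros simp: abs_if\<close>)
    hence "(D n has_real_derivative (-1)^n * (Fd (Suc n) (1/2 - x) * (0 - 1))) (at x)"
      unfolding D_def by (rule DERIV_cmult)
    thus ?thesis by (simp add: D_def)
  qed
  have U: "open {0<..<(1::real)}" by simp
  have main: "\<forall>x\<in>{0<..<1}. (deriv ^^ n) f x = D n x" for n
  proof (induction n)
    case 0 then show ?case using eq by (simp add: D_def)
  next
    case (Suc n)
    show ?case
    proof
      fix x :: real assume x: "x \<in> {0<..<1}"
      have ev: "eventually (\<lambda>y. (deriv ^^ n) f y = D n y) (nhds x)"
        using Suc.IH x by (intro eventually_nhds_in_open[OF U, THEN eventually_mono]) auto
      have "((deriv ^^ n) f has_real_derivative D (Suc n) x) (at x)"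
        using dD[of x n] x by (subst DERIV_cong_ev[OF refl ev refl]) auto
      thus "(deriv ^^ Suc n) f x = D (Suc n) x"
        by (simp add: DERIV_imp_deriv)
    qed
  qed
  show ?thesis
    unfolding strictly_completely_monotonic_on_def
  proof (intro conjI allI ballI)
    fix n and x :: real assume x: "x \<in> {0<..<1/2}"
    hence x1: "x \<in> {0<..<1}" by auto
    have ev: "eventually (\<lambda>y. (deriv ^^ n) f y = D n y) (nhds x)"
      using main x1 by (intro eventually_nhds_in_open[OF U, THEN eventually_mono]) auto
    have "((deriv ^^ n) f has_real_derivative D (Suc n) x) (at x)"
      using dD[of x n] x1 by (subst DERIV_cong_ev[OF refl ev refl]) auto
    moreover have "(deriv ^^ Suc n) f x = D (Suc n) x" using main x1 by blast
    ultimately show "((deriv ^^ n) f has_real_derivative (deriv ^^ Suc n) f x) (at x)"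
      by simp
    have "(-1)^n * (deriv ^^ n) f x = Fd n (1/2 - x)"
      using main x1 by (simp add: D_def flip: mult.assoc power_add) 
    also have "\<dots> > 0" using pos x by auto
    finally show "(-1)^n * (deriv ^^ n) f x > 0" .
  qed
qed

lemma Gamma_reflection_real:
  fixes x :: real
  assumes "0 < x" "x < 1"
  shows "Gamma x * Gamma (1 - x) = pi / sin (pi * x)"
proof -
  have "Gamma (complex_of_real x) * Gamma (1 - complex_of_real x) = of_real pi / sin (of_real pi * of_real x)"
    by (rule Gamma_reflection_complex)
  moreover have "Gamma (1 - complex_of_real x) = of_real (Gamma (1 - x))"
    using Gamma_complex_of_real[of "1-x"] by simp
  ultimately have "complex_of_real (Gamma x * Gamma (1 - x)) = complex_of_real (pi / sin (pi * x))"
    by (simp add: Gamma_complex_of_real flip: sin_of_real)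
  thus ?thesis by (simp only: of_real_eq_iff)
qed

lemma Beta_refl:
  fixes x :: real
  assumes "0 < x" "x < 1"
  shows "Beta x (1 - x) = pi / sin (pi * x)"
  using Gamma_reflection_real[OF assms] by (simp add: Beta_def)

lemma Digamma_cot:
  fixes z :: real
  assumes z: "0 < z" "z < 1"
  shows "Digamma (1 - z) - Digamma z = pi * cos (pi * z) / sin (pi * z)"
proof -
  define h where "h y = Gamma y * Gamma (1 - y) * sin (pi * y)" for y :: real
  have hc: "h y = pi" if "0 < y" "y < 1" for y
    using Gamma_reflection_real[OF that] that sin_gt_zero[of "pi*y"]
    by (simp add: h_def)
  have ng: "y \<notin> \<int>\<^sub>\<le>\<^sub>0" if "0 < y" for y :: real
    using that by (auto elim!: nonpos_Ints_cases)
  have g1: "(Gamma has_real_derivative Gamma z * Digamma z) (at z)"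
    using ng[of z] z by (intro has_field_derivative_Gamma) auto
  have g2: "((\<lambda>y. Gamma (1 - y)) has_real_derivative Gamma (1 - z) * Digamma (1 - z) * (-1)) (at z)"
    using ng[of "1-z"] z by (intro DERIV_chain2[of Gamma] has_field_derivative_Gamma) (auto intro!: derivative_eq_intros)
  have g3: "((\<lambda>y. sin (pi * y)) has_real_derivative cos (pi * z) * pi) (at z)"
    by (auto intro!: derivative_eq_intros)
  have "((\<lambda>y. Gamma y * Gamma (1 - y) * sin (pi * y)) has_real_derivative
      (Gamma z * Gamma (1 - z)) * (cos (pi * z) * pi) + (Gamma z * (Gamma (1 - z) * Digamma (1 - z) * (-1)) + Gamma z * Digamma z * Gamma (1 - z)) * sin (pi * z)) (at z)"
    by (intro DERIV_mult' g1 g2 g3)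
  moreover have ev: "eventually (\<lambda>y. h y = pi) (nhds z)"
    using z by (intro eventually_nhds_in_open[of "{0<..<1}", THEN eventually_mono]) (auto intro: hc)
  have "(h has_real_derivative 0) (at z)"
    by (subst DERIV_cong_ev[OF refl ev refl]) simp
  ultimately have "(Gamma z * Gamma (1 - z)) * (cos (pi * z) * pi) + (Gamma z * (Gamma (1 - z) * Digamma (1 - z) * (-1)) + Gamma z * Digamma z * Gamma (1 - z)) * sin (pi * z) = 0"
    unfolding h_def by (rule DERIV_unique)
  hence "(Gamma z * Gamma (1 - z)) * ((Digamma z - Digamma (1 - z)) * sin (pi * z) + pi * cos (pi * z)) = 0"
    by (simp add: algebra_simps)
  moreover have "Gamma z * Gamma (1 - z) \<noteq> 0"
  proof -
    have "Gamma z > 0" "Gamma (1 - z) > 0" using z by simp_all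
    thus ?thesis by (metis mult_pos_pos less_irrefl)
  qed
  ultimately have "(Digamma z - Digamma (1 - z)) * sin (pi * z) + pi * cos (pi * z) = 0" by simp
  moreover have "sin (pi * z) > 0" using z by (intro sin_gt_zero) auto
  ultimately show ?thesis by (simp add: field_simps)
qed

lemma Beta_Digamma:
  fixes x :: real
  assumes x: "0 < x" "x < 1"
  shows "Beta x (1 - x) = (Digamma (1 - x/2) - Digamma (x/2) + Digamma ((1+x)/2) - Digamma ((1-x)/2)) / 2"
proof -
  define \<theta> where "\<theta> = pi * x / 2"
  have px: "0 < pi * x" using x by simp
  have "pi * x < pi * 1" using x by (intro mult_strict_left_mono) auto
  hence t1: "0 < \<theta>" "\<theta> < pi/2" using px unfolding \<theta>_def by auto
  have s: "sin \<theta> > 0" using t1 by (intro sin_gt_zero) auto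
  have c: "cos \<theta> > 0" using t1 pi_gt_zero by (intro cos_gt_zero_pi) auto
  have 1: "Digamma (1 - x/2) - Digamma (x/2) = pi * cos \<theta> / sin \<theta>"
    using Digamma_cot[of "x/2"] x by (simp add: \<theta>_def)
  have 2: "Digamma (1 - (1+x)/2) - Digamma ((1+x)/2) = pi * cos (pi * ((1+x)/2)) / sin (pi * ((1+x)/2))"
    using x by (intro Digamma_cot) auto
  have e: "pi * ((1+x)/2) = \<theta> + pi/2" by (simp add: \<theta>_def field_simps)
  have c1: "cos (pi * ((1+x)/2)) = - sin \<theta>" and s1: "sin (pi * ((1+x)/2)) = cos \<theta>"
    unfolding e cos_add sin_add by simp_all
  have h: "1 - (1+x)/2 = (1-x)/(2::real)" by (simp add: field_simps)
  have 2: "Digamma ((1-x)/2) - Digamma ((1+x)/2) = - pi * sin \<theta> / cos \<theta>"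
    using 2 unfolding h c1 s1 by simp
  have "sin (pi * x) = 2 * sin \<theta> * cos \<theta>"
    unfolding \<theta>_def using sin_double[of "pi*x/2"] by simp
  hence "Beta x (1 - x) = pi / (2 * sin \<theta> * cos \<theta>)" using Beta_refl[OF x] by simp
  also have "\<dots> = (pi * cos \<theta> / sin \<theta> - (- pi * sin \<theta> / cos \<theta>)) / 2"
  proof -
    have sc: "sin \<theta> * sin \<theta> + cos \<theta> * cos \<theta> = 1" using sin_cos_squared_add3[of \<theta>] by linarith
    have sc': "pi * (cos \<theta> * cos \<theta>) + pi * (sin \<theta> * sin \<theta>) = pi"
      by (simp flip: distrib_left)
    show ?thesis using s c sc' by (simp add: field_simps)
  qed
  finally show ?thesis using 1 2 by simp
qed

lemma Digamma_diff_sums: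
  fixes z1 z2 :: real
  assumes "z1 \<noteq> 0" "z2 \<noteq> 0"
  shows "(\<lambda>k. 1/(z2 + real k) - 1/(z1 + real k)) sums (Digamma z1 - Digamma z2)"
proof -
  have a: "(\<lambda>k. inverse (real (Suc k)) - inverse (z + real k)) sums (Digamma z + euler_mascheroni)"
    if "z \<noteq> 0" for z :: real
    using summable_Digamma[OF that] by (simp add: Digamma_def summable_sums)
  from sums_diff[OF a[OF assms(1)] a[OF assms(2)]] show ?thesis
    by (simp add: inverse_eq_divide)
qed

definition ak :: "nat \<Rightarrow> real" where "ak k = real k + 1/2"

lemma ph_ak: "ph (ak k) (1/2 - x) = 1/(real k + x) + 1/(real k + 1 - x)"
  by (simp add: ph_def ak_def algebra_simps)

lemma R_sums:
  fixes x :: real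
  assumes x: "0 < x" "x < 1"
  shows "(\<lambda>k. ph (ak k) (1/2 - x) - 2/(real k + 1)) sums RR x (1 - x)"
proof -
  have a: "(\<lambda>k. inverse (real (Suc k)) - inverse (z + real k)) sums (Digamma z + euler_mascheroni)"
    if "z \<noteq> 0" for z :: real
    using summable_Digamma[OF that] by (simp add: Digamma_def summable_sums)
  from sums_add[OF a[of x] a[of "1-x"]] x
  have "(\<lambda>k. (inverse (real (Suc k)) - inverse (x + real k)) + (inverse (real (Suc k)) - inverse ((1-x) + real k)))
      sums (Digamma x + euler_mascheroni + (Digamma (1-x) + euler_mascheroni))" by simp
  from sums_minus[OF this]
  have "(\<lambda>k. - ((inverse (real (Suc k)) - inverse (x + real k)) + (inverse (real (Suc k)) - inverse ((1-x) + real k))))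
      sums (- (Digamma x + euler_mascheroni + (Digamma (1-x) + euler_mascheroni)))" .
  moreover have "- (Digamma x + euler_mascheroni + (Digamma (1-x) + euler_mascheroni)) = RR x (1 - x)"
    by (simp add: RR_def algebra_simps)
  ultimately have "(\<lambda>k. - ((inverse (real (Suc k)) - inverse (x + real k)) + (inverse (real (Suc k)) - inverse ((1-x) + real k))))
      sums RR x (1 - x)" by simp
  moreover have "- ((inverse (real (Suc k)) - inverse (x + real k)) + (inverse (real (Suc k)) - inverse ((1-x) + real k)))
      = ph (ak k) (1/2 - x) - 2/(real k + 1)" for k
    unfolding ph_ak by (simp add: inverse_eq_divide algebra_simps)
  ultimately show ?thesis by simp
qed

lemma B_sums:
  fixes x :: real
  assumes x: "0 < x" "x < 1"
  shows "(\<lambda>k. ph (ak (2*k)) (1/2 - x) - ph (ak (2*k+1)) (1/2 - x)) sums Beta x (1 - x)"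
proof -
  have s1: "(\<lambda>k. 1/(x/2 + real k) - 1/((1 - x/2) + real k)) sums (Digamma (1 - x/2) - Digamma (x/2))"
    using x by (intro Digamma_diff_sums) auto
  have s2: "(\<lambda>k. 1/((1-x)/2 + real k) - 1/((1+x)/2 + real k)) sums (Digamma ((1+x)/2) - Digamma ((1-x)/2))"
    using x by (intro Digamma_diff_sums) auto
  have eqB: "((Digamma (1 - x/2) - Digamma (x/2)) + (Digamma ((1+x)/2) - Digamma ((1-x)/2))) / 2 = Beta x (1 - x)"
    using Beta_Digamma[OF x] by simp
  from sums_divide[OF sums_add[OF s1 s2], of 2]
  have "(\<lambda>k. ((1/(x/2 + real k) - 1/((1 - x/2) + real k)) + (1/((1-x)/2 + real k) - 1/((1+x)/2 + real k))) / 2)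
     sums Beta x (1 - x)"
    unfolding eqB .
  moreover have "((1/(x/2 + real k) - 1/((1 - x/2) + real k)) + (1/((1-x)/2 + real k) - 1/((1+x)/2 + real k))) / 2
     = ph (ak (2*k)) (1/2 - x) - ph (ak (2*k+1)) (1/2 - x)" for k
  proof -
    have "1/(x/2 + real k) = 2/(real (2*k) + x)" "1/((1 - x/2) + real k) = 2 / (real (2*k+1) + 1 - x)"
         "1/((1-x)/2 + real k) = 2/(real (2*k) + 1 - x)" "1/((1+x)/2 + real k) = 2/(real (2*k+1) + x)"
      using x by (simp_all add: field_simps)
    thus ?thesis unfolding ph_ak by simp
  qed
  ultimately show ?thesis by simp
qed

lemma sum_pairs: fixes u :: "nat \<Rightarrow> real" and n :: nat shows "(\<Sum>i<n. u (2*i) + u (2*i+1)) = (\<Sum>k<2*n. (u k :: real))"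
  by (induction n) (simp_all add: algebra_simps)

lemma sum_pairs': fixes u :: "nat \<Rightarrow> real" and n :: nat shows "(\<Sum>i<n. u (2*i+1) + u (2*i+2)) = (\<Sum>k<2*n+1. (u k :: real)) - u 0"
  by (induction n) (simp_all add: algebra_simps)

lemma pair_shift:
  fixes u :: "nat \<Rightarrow> real"
  assumes S: "(\<lambda>i. u (2*i) + u (2*i+1)) sums S" and u0: "u \<longlonglongrightarrow> 0"
  shows "(\<lambda>i. u (2*i+1) + u (2*i+2)) sums (S - u 0)"
proof -
  have P: "(\<lambda>n. \<Sum>k<2*n. u k) \<longlonglongrightarrow> S" using S unfolding sums_def sum_pairs .
  have "strict_mono (\<lambda>n::nat. 2*n)" by (auto simp: strict_mono_def)
  from LIMSEQ_subseq_LIMSEQ[OF u0 this] have E: "(\<lambda>n. u (2*n)) \<longlonglongrightarrow> 0" by (simp add: o_def)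
  have "(\<lambda>n. (\<Sum>k<2*n. u k) + u (2*n) - u 0) \<longlonglongrightarrow> S + 0 - u 0"
    by (intro tendsto_intros P E)
  moreover have "(\<Sum>k<2*n. u k) + u (2*n) - u 0 = (\<Sum>i<n. u (2*i+1) + u (2*i+2))" for n
    unfolding sum_pairs' by simp
  ultimately show ?thesis unfolding sums_def by simp
qed

lemma group2:
  fixes v :: "nat \<Rightarrow> real"
  assumes "v sums S"
  shows "(\<lambda>i. v (2*i) + v (2*i+1)) sums S"
  using sums_group[OF assms, of 2] by (simp add: mult.commute)

lemma group2_shift:
  fixes v :: "nat \<Rightarrow> real"
  assumes "v sums S"
  shows "(\<lambda>i. v (2*i+1) + v (2*i+2)) sums (S - v 0)"
proof -
  have "(\<lambda>k. v (Suc k)) sums (S - v 0)" using assms by (simp add: sums_Suc_iff)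
  from group2[OF this] show ?thesis by (simp add: numeral_2_eq_2)
qed

lemma ph_tendsto: "(\<lambda>k. ph (ak k) t) \<longlonglongrightarrow> 0"
proof -
  have "(\<lambda>k. 1/((1/2 - t) + real k) + 1/((1/2 + t) + real k)) \<longlonglongrightarrow> 0 + 0"
    by (intro tendsto_add tendsto_divide_0[OF tendsto_const] filterlim_at_top_imp_at_infinity filterlim_tendsto_add_at_top[OF tendsto_const] filterlim_real_sequentially)
  thus ?thesis by (simp add: ph_def ak_def algebra_simps)
qed

definition pp :: "real \<Rightarrow> real" where "pp s = 19/16 - s/2 - s^2"
definition Gf :: "nat \<Rightarrow> real" where "Gf k = (-1)^k * pp ((ak k)^2) - 1"
definition linf :: "nat \<Rightarrow> real" where "linf k = (-1)^k * (19/(8*ak k^3) - 1/ak k) - 2/ak k^3"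
definition Af :: "nat \<Rightarrow> real" where "Af i = Gf (2*i+1) / ak (2*i+1)^4"
definition Cf :: "nat \<Rightarrow> real" where "Cf i = Gf (2*i+2) / ak (2*i+2)^4"
definition Lf :: "nat \<Rightarrow> real" where "Lf i = linf (2*i+1) + linf (2*i+2)"
definition Wt :: "nat \<Rightarrow> nat \<Rightarrow> real \<Rightarrow> real" where
  "Wt i r t = Af i * phi r (ak (2*i+1)) t + Cf i * phi r (ak (2*i+2)) t"

lemma ph_alt: "a \<noteq> t \<Longrightarrow> a \<noteq> -t \<Longrightarrow> ph a t = 2*a/(a^2 - t^2)"
  unfolding ph_def by (simp add: field_simps power2_eq_square)

lemma part1:
  fixes a D :: real
  assumes "a \<noteq> 0" "D \<noteq> 0"
  shows "2*a/D - 2/a - 2*(a^2 - D)/a^3 = (a^2-D)^2 * (2*a/D) / a^4"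
  using assms by (simp add: field_simps) algebra

lemma part2:
  fixes a D :: real
  assumes "a \<noteq> 0" "D \<noteq> 0"
  shows "pp (a^2 - D) * (2*a/D) - pp 0 * (2/a) = (a^2 - D) * (19/(8*a^3) - 1/a) + (a^2 - D)^2 * (pp (a^2) * (2*a/D) / a^4)"
  using assms unfolding pp_def by (simp add: field_simps) algebra

lemma perk:
  fixes a t c :: real
  assumes "a \<noteq> 0" "a \<noteq> t" "a \<noteq> -t"
  shows "(c * pp (t^2) - 1) * ph a t - (c * pp 0 - 1) * ph a 0
       = t^2 * (c * (19/(8*a^3) - 1/a) - 2/a^3) + (t^2)^2 * ((c * pp (a^2) - 1) * ph a t / a^4)"
proof -
  define D where "D = a^2 - t^2"
  have "a^2 \<noteq> t^2" using assms by (simp add: power2_eq_iff)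
  hence D: "D \<noteq> 0" unfolding D_def by simp
  have s: "t^2 = a^2 - D" unfolding D_def by simp
  have ph0: "ph a 0 = 2/a" using assms by (simp add: ph_def)
  have pht: "ph a t = 2*a/D" unfolding D_def using assms(2,3) by (rule ph_alt)
  note E1 = part1[OF assms(1) D] and E2 = part2[OF assms(1) D]
  have E1': "2*a/D - 2/a = 2*(a^2 - D)/a^3 + (a^2-D)^2 * (2*a/D) / a^4"
    using E1 by linarith
  define P where "P = 2*a/D"
  define Q where "Q = (a^2-D)^2 * (2*a/D) / a^4"
  define Q2 where "Q2 = (a^2 - D)^2 * (pp (a^2) * (2*a/D) / a^4)"
  have "(c * pp (t^2) - 1) * ph a t - (c * pp 0 - 1) * ph a 0
      = c * (pp (a^2 - D) * (2*a/D) - pp 0 * (2/a)) - (2*a/D - 2/a)"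
    unfolding s ph0 pht by (simp add: algebra_simps)
  also have "\<dots> = c * ((a^2 - D) * (19/(8*a^3) - 1/a) + (a^2 - D)^2 * (pp (a^2) * (2*a/D) / a^4))
       - (2*(a^2 - D)/a^3 + (a^2-D)^2 * (2*a/D) / a^4)"
    unfolding E2 E1' by (rule refl)
  also have "\<dots> = t^2 * (c * (19/(8*a^3) - 1/a) - 2/a^3) + (t^2)^2 * ((c * pp (a^2) - 1) * ph a t / a^4)"
    unfolding s pht using assms(1) D by (simp add: field_simps)
  finally show ?thesis .
qed

definition ff :: "real \<Rightarrow> real" where
  "ff x = (1 + x * (1 - x) - (x * (1 - x))^2) * Beta x (1 - x) - RR x (1 - x)"

lemma pp_x: "pp ((1/2 - x)^2) = 1 + x * (1 - x) - (x * (1 - x))^2"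
  unfolding pp_def by (simp add: field_simps power2_eq_square)

lemma alt_tendsto: "(f :: nat \<Rightarrow> real) \<longlonglongrightarrow> 0 \<Longrightarrow> (\<lambda>k. (-1)^k * f k) \<longlonglongrightarrow> 0"
  by (rule tendsto_norm_zero_cancel) (simp add: abs_mult tendsto_rabs_zero)

lemma ff_sums:
  fixes y :: real
  assumes y: "0 < y" "y < 1"
    and sg: "\<sigma> = 1/2 - y"
  shows "(\<lambda>i. pp (\<sigma>^2) * ((-1)^(2*i+1) * ph (ak (2*i+1)) \<sigma> + (-1)^(2*i+2) * ph (ak (2*i+2)) \<sigma>)
           - ((ph (ak (2*i+1)) \<sigma> - 2/(real (2*i+1) + 1)) + (ph (ak (2*i+2)) \<sigma> - 2/(real (2*i+2) + 1))))
         sums (ff y - ((pp (\<sigma>^2) - 1) * ph (ak 0) \<sigma> + 2))"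
proof -
  define u where "u k = (-1)^k * ph (ak k) \<sigma>" for k
  define v where "v k = ph (ak k) \<sigma> - 2/(real k + 1)" for k
  have B: "(\<lambda>i. u (2*i) + u (2*i+1)) sums Beta y (1 - y)"
    using B_sums[OF y, folded sg] unfolding u_def by simp
  have u0: "u \<longlonglongrightarrow> 0" unfolding u_def by (intro alt_tendsto ph_tendsto)
  from pair_shift[OF B u0]
  have B': "(\<lambda>i. u (2*i+1) + u (2*i+2)) sums (Beta y (1 - y) - ph (ak 0) \<sigma>)"
    by (simp add: u_def sg)
  have R': "(\<lambda>i. v (2*i+1) + v (2*i+2)) sums (RR y (1 - y) - v 0)"
    using group2_shift[OF R_sums[OF y, folded sg]] unfolding v_def by simp
  from sums_diff[OF sums_mult[OF B', of "pp (\<sigma>^2)"] R']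
  have S: "(\<lambda>i. pp (\<sigma>^2) * (u (2*i+1) + u (2*i+2)) - (v (2*i+1) + v (2*i+2)))
        sums (pp (\<sigma>^2) * (Beta y (1 - y) - ph (ak 0) \<sigma>) - (RR y (1 - y) - v 0))" .
  have eq: "pp (\<sigma>^2) * (Beta y (1 - y) - ph (ak 0) \<sigma>) - (RR y (1 - y) - v 0)
      = ff y - ((pp (\<sigma>^2) - 1) * ph (ak 0) \<sigma> + 2)"
    unfolding ff_def sg pp_x by (simp add: v_def sg algebra_simps)
  from S have "(\<lambda>i. pp (\<sigma>^2) * (u (2*i+1) + u (2*i+2)) - (v (2*i+1) + v (2*i+2)))
        sums (ff y - ((pp (\<sigma>^2) - 1) * ph (ak 0) \<sigma> + 2))" unfolding eq .
  thus ?thesis unfolding u_def v_def by simp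
qed

lemma k0_term:
  fixes t :: real
  assumes "\<bar>t\<bar> < 1/2"
  shows "(pp (t^2) - 1) * ph (ak 0) t + 2 = 11/4 + t^2"
proof -
  have n: "1/2 - t \<noteq> 0" "1/2 + t \<noteq> 0" using assms by auto
  have a: "pp (t^2) - 1 = (1/2 - t) * (1/2 + t) * (3/4 + t^2)"
    unfolding pp_def by (simp add: field_simps power2_eq_square)
  have b: "ph (ak 0) t = 1 / ((1/2 - t) * (1/2 + t))"
    unfolding ph_def ak_def using n by (simp add: field_simps)
  show ?thesis unfolding a b using n by simp
qed

definition Tf :: "real \<Rightarrow> nat \<Rightarrow> real" where
  "Tf s i = pp (s^2) * ((-1)^(2*i+1) * ph (ak (2*i+1)) s + (-1)^(2*i+2) * ph (ak (2*i+2)) s)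
           - ((ph (ak (2*i+1)) s - 2/(real (2*i+1) + 1)) + (ph (ak (2*i+2)) s - 2/(real (2*i+2) + 1)))"

lemma ak_ge: "ak k \<ge> 1/2" by (simp add: ak_def)

lemma Tf_diff:
  assumes t: "\<bar>t\<bar> < 1/2"
  shows "Tf t i - Tf 0 i = t^2 * Lf i + (t^2)^2 * Wt i 0 t"
proof -
  define a1 where "a1 = ak (2*i+1)"
  define a2 where "a2 = ak (2*i+2)"
  have a: "a1 \<ge> 3/2" "a2 \<ge> 3/2" unfolding a1_def a2_def ak_def by auto
  have n1: "a1 \<noteq> 0" "a1 \<noteq> t" "a1 \<noteq> -t" using a t by auto
  have n2: "a2 \<noteq> 0" "a2 \<noteq> t" "a2 \<noteq> -t" using a t by auto
  note p1 = perk[OF n1, of "-1"] and p2 = perk[OF n2, of 1]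
  have "Tf t i - Tf 0 i = (((-1) * pp (t^2) - 1) * ph a1 t - ((-1) * pp 0 - 1) * ph a1 0)
         + ((1 * pp (t^2) - 1) * ph a2 t - (1 * pp 0 - 1) * ph a2 0)"
    unfolding Tf_def a1_def a2_def by (simp add: algebra_simps)
  also have "\<dots> = t^2 * Lf i + (t^2)^2 * Wt i 0 t"
    unfolding p1 p2 Lf_def linf_def Wt_def Af_def Cf_def Gf_def phi_0 a1_def[symmetric] a2_def[symmetric]
    by (simp add: algebra_simps)
  finally show ?thesis .
qed

lemma ff_diff_sums:
  fixes x :: real
  assumes x: "0 < x" "x < 1"
  shows "(\<lambda>i. (1/2 - x)^2 * Lf i + ((1/2 - x)^2)^2 * Wt i 0 (1/2 - x)) sums (ff x - ff (1/2) - (1/2 - x)^2)"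
proof -
  have S1: "(\<lambda>i. Tf (1/2 - x) i) sums (ff x - ((pp ((1/2 - x)^2) - 1) * ph (ak 0) (1/2 - x) + 2))"
    using ff_sums[OF x refl] unfolding Tf_def .
  have S2: "(\<lambda>i. Tf 0 i) sums (ff (1/2) - ((pp (0^2) - 1) * ph (ak 0) 0 + 2))"
    using ff_sums[of "1/2" 0] unfolding Tf_def by simp
  have t: "\<bar>1/2 - x\<bar> < 1/2" using x by (auto simp: abs_if)
  have v: "ff x - ((pp ((1/2 - x)^2) - 1) * ph (ak 0) (1/2 - x) + 2) - (ff (1/2) - ((pp (0^2) - 1) * ph (ak 0) 0 + 2))
      = ff x - ff (1/2) - (1/2 - x)^2"
    unfolding k0_term[OF t] by (simp add: pp_def ph_def ak_def)
  from sums_diff[OF S1 S2]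
  have "(\<lambda>i. Tf (1/2 - x) i - Tf 0 i) sums (ff x - ff (1/2) - (1/2 - x)^2)"
    unfolding v .
  thus ?thesis unfolding Tf_diff[OF t] by (simp add: algebra_simps)
qed

definition Ef :: "nat \<Rightarrow> real" where "Ef i = 1/ak (2*i+1) - 1/ak (2*i+2)"
definition Nf :: "nat \<Rightarrow> real" where "Nf i = 35/(8*ak (2*i+1)^3) - 3/(8*ak (2*i+2)^3)"
definition tt :: "nat \<Rightarrow> real" where "tt j = 1/(4*(2*real j + 1/2)^2)"

lemma Lf_eq: "Lf i = Ef i - Nf i"
  unfolding Lf_def linf_def Ef_def Nf_def by (simp add: algebra_simps)

lemma leibniz_pi: "(\<lambda>k. (-1)^k / ak k) sums (pi/2)"
proof -
  have s: "summable (\<lambda>k. (-1)^k * (1 / real (k*2+1) * 1^(k*2+1)))"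
    by (rule summable_arctan_series) simp
  have eq: "arctan 1 = (\<Sum>k. (-1)^k * (1 / real (k*2+1) * 1^(k*2+1)))"
    by (rule arctan_series) simp
  from summable_sums[OF s]
  have "(\<lambda>k. (-1)^k * (1 / real (k*2+1) * 1^(k*2+1))) sums arctan 1" unfolding eq[symmetric] .
  hence "(\<lambda>k. (-1)^k * (1 / real (k*2+1)) * 2) sums (pi/4 * 2)"
    unfolding arctan_one by (intro sums_mult2) simp
  moreover have "(-1)^k * (1 / real (k*2+1)) * 2 = (-1)^k / ak k" for k
    by (simp add: ak_def field_simps)
  ultimately show ?thesis by simp
qed

lemma Ef_sums: "Ef sums (2 - pi/2)"
proof -
  from group2_shift[OF leibniz_pi]
  have "(\<lambda>i. (-1)^(2*i+1) / ak (2*i+1) + (-1)^(2*i+2) / ak (2*i+2)) sums (pi/2 - 1 / ak 0)" by simp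
  from sums_minus[OF this] show ?thesis
    unfolding Ef_def[abs_def] by (simp add: ak_def algebra_simps)
qed

lemma inv_cube_le:
  fixes a :: real
  assumes "a \<ge> 3/2"
  shows "1/a^3 \<le> 1/(4*(a-1)^2) - 1/(4*(a+1)^2)"
proof -
  have p: "a - 1 > 0" "a + 1 > 0" "a > 0" using assms by auto
  have "1/(4*(a-1)^2) - 1/(4*(a+1)^2) = a / ((a-1)^2 * (a+1)^2)"
    using p by (simp add: field_simps) algebra
  moreover have "1/a^3 \<le> a / ((a-1)^2 * (a+1)^2)"
  proof -
    have "(a-1)^2 * (a+1)^2 = (a^2 - 1)^2" by algebra
    also have "\<dots> \<le> (a^2)^2"
    proof -
      have "1 \<le> a^2" using assms by (intro one_le_power) auto
      thus ?thesis by (intro power_mono) auto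
    qed
    finally have "(a-1)^2 * (a+1)^2 \<le> a^4" by simp
    hence "(a-1)^2 * (a+1)^2 * 1 \<le> a * a^3" by (simp add: power_Suc[symmetric] del: power_Suc)
    thus ?thesis using p by (simp add: field_simps)
  qed
  ultimately show ?thesis by simp
qed

lemma tt_tendsto: "tt \<longlonglongrightarrow> 0"
  unfolding tt_def
  by real_asymp

lemma Nf_bounds: "0 \<le> Nf i" "Nf i \<le> 35/8 * (tt i - tt (Suc i))"
proof -
  define a where "a = ak (2*i+1)"
  have a: "a = 2 * real i + 3/2" "ak (2*i+2) = a + 1" unfolding a_def ak_def by simp_all
  have a0: "a \<ge> 3/2" using a by simp
  have "a^3 \<le> (a+1)^3" using a0 by (intro power_mono) auto
  hence "3/(8*(a+1)^3) \<le> 35/(8*a^3)" using a0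
    by (intro frac_le) (auto intro!: mult_left_mono)
  thus "0 \<le> Nf i" unfolding Nf_def a_def[symmetric] a(2) by simp
  have "Nf i \<le> 35/(8*a^3)" unfolding Nf_def a_def[symmetric] a(2) using a0 by simp
  also have "\<dots> = 35/8 * (1/a^3)" by simp
  also have "\<dots> \<le> 35/8 * (1/(4*(a-1)^2) - 1/(4*(a+1)^2))"
    using inv_cube_le[OF a0] by simp
  also have "1/(4*(a-1)^2) - 1/(4*(a+1)^2) = tt i - tt (Suc i)"
    unfolding tt_def a(1) by (simp add: algebra_simps)
  finally show "Nf i \<le> 35/8 * (tt i - tt (Suc i))" .
qed

lemma tt_tel: "(\<lambda>i. tt i - tt (Suc i)) sums tt 0"
  using telescope_sums'[OF tt_tendsto] by simp

lemma Nf_summable: "summable Nf"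
proof (rule summable_comparison_test)
  show "\<exists>N. \<forall>n\<ge>N. norm (Nf n) \<le> 35/8 * (tt n - tt (Suc n))"
    using Nf_bounds by auto
  show "summable (\<lambda>n. 35/8 * (tt n - tt (Suc n)))"
    using tt_tel by (intro summable_mult sums_summable) 
qed

lemma Lf_summable: "summable Lf"
proof -
  have "summable (\<lambda>i. Ef i - Nf i)" using Ef_sums Nf_summable by (intro summable_diff) (auto simp: sums_summable)
  thus ?thesis unfolding Lf_eq[abs_def] .
qed

lemma tt_tel3: "(\<lambda>n. tt (n+3) - tt (Suc (n+3))) sums tt 3"
proof -
  have "(\<lambda>n. tt (n + 3)) \<longlonglongrightarrow> 0" using tt_tendsto by (rule LIMSEQ_ignore_initial_segment)
  from telescope_sums'[OF this] show ?thesis by simp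
qed

lemma Nf_suminf_le: "suminf Nf \<le> Nf 0 + Nf 1 + Nf 2 + 35/8 * tt 3"
proof -
  have T: "(\<lambda>n. 35/8 * (tt (n+3) - tt (Suc (n+3)))) sums (35/8 * tt 3)"
    by (rule sums_mult[OF tt_tel3])
  have "suminf Nf = (\<Sum>n. Nf (n + 3)) + (\<Sum>i<3. Nf i)"
    by (rule suminf_split_initial_segment[OF Nf_summable])
  moreover have "(\<Sum>n. Nf (n + 3)) \<le> (\<Sum>n. 35/8 * (tt (n+3) - tt (Suc (n+3))))"
  proof (rule suminf_le)
    show "Nf (n + 3) \<le> 35/8 * (tt (n+3) - tt (Suc (n+3)))" for n using Nf_bounds(2) .
    show "summable (\<lambda>n. Nf (n + 3))" using Nf_summable by (subst summable_iff_shift)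
    show "summable (\<lambda>n. 35/8 * (tt (n+3) - tt (Suc (n+3))))" using T by (rule sums_summable)
  qed
  moreover have "(\<Sum>n. 35/8 * (tt (n+3) - tt (Suc (n+3)))) = 35/8 * tt 3"
    using T by (rule sums_unique[symmetric])
  moreover have "(\<Sum>i<3. Nf i) = Nf 0 + Nf 1 + Nf 2"
  proof -
    have "{..<3::nat} = {0,1,2}" by auto
    thus ?thesis by simp
  qed
  ultimately show ?thesis by linarith
qed

definition c1 :: real where "c1 = 1 + suminf Lf"

lemma c1_nonneg: "c1 \<ge> 0"
proof -
  have "suminf Lf = suminf Ef - suminf Nf"
    unfolding Lf_eq[abs_def] using Ef_sums Nf_summable by (intro suminf_diff[symmetric]) (auto simp: sums_summable)
  also have "suminf Ef = 2 - pi/2" using Ef_sums by (simp add: sums_iff)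
  finally have "c1 = 3 - pi/2 - suminf Nf" unfolding c1_def by simp
  moreover have "3 - pi/2 - (Nf 0 + Nf 1 + Nf 2 + 35/8 * tt 3) \<ge> 0"
    using pi_approx by (simp add: Nf_def ak_def tt_def power_divide)
  ultimately show ?thesis using Nf_suminf_le by linarith
qed

lemma Gf_odd: "Gf (2*i+1) = ak (2*i+1)^4 + ak (2*i+1)^2/2 - 35/16"
  unfolding Gf_def pp_def by (simp add: power2_eq_square power4_eq_xxxx algebra_simps)

lemma Gf_even: "Gf (2*i+2) = 3/16 - ak (2*i+2)^2/2 - ak (2*i+2)^4"
  unfolding Gf_def pp_def by (simp add: power2_eq_square power4_eq_xxxx algebra_simps)

lemma Af_pos: "Af i > 0" and Af_le: "Af i \<le> 2"
proof -
  define a where "a = ak (2*i+1)"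
  have a: "a \<ge> 3/2" unfolding a_def ak_def by simp
  have a4: "a^4 \<ge> (3/2)^4" using a by (intro power_mono) auto
  have a2: "a^2 \<le> a^4" using a by (intro power_increasing) auto
  have a20: "a^2 \<ge> 0" by simp
  have e: "Af i = (a^4 + a^2/2 - 35/16) / a^4" unfolding Af_def Gf_odd a_def ..
  have d: "a^4 > 0" using a by simp
  have "a^4 \<ge> 81/16" using a4 by (simp add: power_divide)
  hence n: "a^4 + a^2/2 - 35/16 > 0" using a20 by linarith
  have n2: "a^4 + a^2/2 - 35/16 \<le> 2 * a^4" using a2 a20 by linarith
  show "Af i > 0" unfolding e using n d by (rule divide_pos_pos)
  show "Af i \<le> 2" unfolding e using n2 d by (simp add: pos_divide_le_eq)
qed

lemma Cf_neg: "Cf i < 0" and Cf_ge: "Cf i \<ge> -2"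
proof -
  define a where "a = ak (2*i+2)"
  have a: "a \<ge> 5/2" unfolding a_def ak_def by simp
  have a4: "a^4 \<ge> (5/2)^4" using a by (intro power_mono) auto
  have a2: "a^2 \<le> a^4" using a by (intro power_increasing) auto
  have a20: "a^2 \<ge> 0" by simp
  have e: "Cf i = (3/16 - a^2/2 - a^4) / a^4" unfolding Cf_def Gf_even a_def ..
  have d: "a^4 > 0" using a by simp
  have "a^4 \<ge> 625/16" using a4 by (simp add: power_divide)
  hence n: "3/16 - a^2/2 - a^4 < 0" using a20 by linarith
  have n2: "-2 * a^4 \<le> 3/16 - a^2/2 - a^4" using a2 a20 \<open>a^4 \<ge> 625/16\<close> by linarith
  show "Cf i < 0" unfolding e using n d by (rule divide_neg_pos)
  show "Cf i \<ge> -2" unfolding e using n2 d by (simp add: pos_le_divide_eq)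
qed

lemma hA: "(b::real) > 0 \<Longrightarrow> ((b^4 + b^2/2 - 35/16) / b^4) / b = 1/b + 1/(2*b^3) - 35/(16*b^5)"
  by (simp add: field_simps eval_nat_numeral)

lemma hC: "(b::real) > 0 \<Longrightarrow> - ((3/16 - b^2/2 - b^4) / b^4) / b = 1/b + 1/(2*b^3) - 3/(16*b^5)"
  by (simp add: field_simps eval_nat_numeral)

lemma AC_key: "Af i / ak (2*i+1) > - Cf i / ak (2*i+2)"
proof (cases "i = 0")
  case True
  show ?thesis unfolding True Af_def Cf_def Gf_odd Gf_even by (simp add: ak_def power_divide)
next
  case False
  define a where "a = ak (2*i+1)"
  have a: "a \<ge> 7/2" unfolding a_def ak_def using False by simp
  have a': "ak (2*i+2) = a + 1" unfolding a_def ak_def by simp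
  have p: "a > 0" "a + 1 > 0" using a by auto
  have L: "Af i / ak (2*i+1) = 1/a + 1/(2*a^3) - 35/(16*a^5)"
    unfolding Af_def Gf_odd a_def[symmetric] using hA[OF p(1)] by simp
  have R: "- Cf i / ak (2*i+2) = 1/(a+1) + 1/(2*(a+1)^3) - 3/(16*(a+1)^5)"
    unfolding Cf_def Gf_even a' using hC[OF p(2)] by simp
  have c1: "1/(2*(a+1)^3) \<le> 1/(2*a^3)" using p by (intro frac_le) (auto intro!: power_mono)
  have c2: "0 \<le> 3/(16*(a+1)^5)" using p by simp
  have c3: "1/a - 1/(a+1) = 1/(a*(a+1))" using p by (simp add: field_simps)
  have "16 * a^4 \<ge> 16 * ((7/2)^3 * a)"
  proof -
    have "a^3 \<ge> (7/2)^3" using a by (intro power_mono) auto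
    hence "a^3 * a \<ge> (7/2)^3 * a" using p by (intro mult_right_mono) auto
    moreover have "a^3 * a = a^4" by (simp add: eval_nat_numeral)
    ultimately show ?thesis by simp
  qed
  hence "16 * a^4 > 35 * (a + 1)" using a by (simp add: power_divide)
  hence "a * (35 * (a + 1)) < a * (16 * a^4)" using p by (intro mult_strict_left_mono) auto
  hence X: "35 * (a + a*a) < 16 * a^5" by (simp add: algebra_simps eval_nat_numeral)
  have "a + a*a > 0" using p by (simp add: add_pos_pos)
  hence "35/(16*a^5) < 1/(a*(a+1))" using p X by (simp add: field_simps)
  thus ?thesis unfolding L R using c1 c2 c3 by linarith
qed

lemma Wt_pos:
  assumes t: "0 < t" "t < 3/2"
  shows "Wt i r t > 0"
proof -
  define a1 where "a1 = ak (2*i+1)"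
  define a2 where "a2 = ak (2*i+2)"
  have a: "a1 \<ge> 3/2" "a2 = a1 + 1" unfolding a1_def a2_def ak_def by auto
  have m: "a2 * phi r a2 t \<le> a1 * phi r a1 t" using t a by (intro phi_mono) auto
  have p2: "phi r a2 t > 0" using t a by (intro phi_pos) auto
  have k: "Af i / a1 > - Cf i / a2" using AC_key unfolding a1_def a2_def .
  have A: "Af i > 0" by (rule Af_pos)
  have "Af i * phi r a1 t = (Af i / a1) * (a1 * phi r a1 t)" using a by simp
  also have "\<dots> \<ge> (Af i / a1) * (a2 * phi r a2 t)"
    using m A a by (intro mult_left_mono) auto
  finally have 1: "Af i * phi r a1 t \<ge> (Af i / a1) * (a2 * phi r a2 t)" .
  have "(Af i / a1) * (a2 * phi r a2 t) > (- Cf i / a2) * (a2 * phi r a2 t)"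
    using k p2 a by (intro mult_strict_right_mono) auto
  also have "(- Cf i / a2) * (a2 * phi r a2 t) = - Cf i * phi r a2 t" using a by simp
  finally have "Af i * phi r a1 t > - Cf i * phi r a2 t" using 1 by linarith
  thus ?thesis unfolding Wt_def a1_def a2_def by simp
qed

lemma Wt_deriv: "\<bar>t\<bar> < 3/2 \<Longrightarrow> (Wt i r has_real_derivative Wt i (Suc r) t) (at t)"
proof -
  assume t: "\<bar>t\<bar> < 3/2"
  have a: "ak (2*i+1) \<ge> 3/2" "ak (2*i+2) \<ge> 3/2" unfolding ak_def by auto
  have "((\<lambda>t. Af i * phi r (ak (2*i+1)) t + Cf i * phi r (ak (2*i+2)) t) has_real_derivative
        Af i * phi (Suc r) (ak (2*i+1)) t + Cf i * phi (Suc r) (ak (2*i+2)) t) (at t)"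
    using a t by (intro DERIV_add DERIV_cmult phi_deriv) auto
  thus ?thesis unfolding Wt_def[abs_def] by simp
qed

lemma phi_bound:
  assumes "\<bar>t\<bar> \<le> \<rho>" "\<rho> < a"
  shows "\<bar>phi r a t\<bar> \<le> 2 * fact r / (a - \<rho>)^(Suc r)"
proof -
  have d: "a - \<rho> > 0" using assms by simp
  have 1: "\<bar>1/(a-t)^(Suc r)\<bar> \<le> 1/(a - \<rho>)^(Suc r)"
  proof -
    have "a - \<rho> \<le> a - t" using assms by auto
    hence "(a - \<rho>)^(Suc r) \<le> (a - t)^(Suc r)" using d by (intro power_mono) auto
    moreover have "(a-t)^(Suc r) > 0" using assms d by simp
    ultimately show ?thesis using d by (simp add: abs_divide frac_le)
  qed
  have 2: "\<bar>(-1)^r/(a+t)^(Suc r)\<bar> \<le> 1/(a - \<rho>)^(Suc r)"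
  proof -
    have "a - \<rho> \<le> a + t" using assms by auto
    hence "(a - \<rho>)^(Suc r) \<le> (a + t)^(Suc r)" using d by (intro power_mono) auto
    moreover have p: "(a+t)^(Suc r) > 0" using assms d by simp
    moreover have "(a - \<rho>)^(Suc r) > 0" using d by simp
    ultimately have "1/(a+t)^(Suc r) \<le> 1/(a - \<rho>)^(Suc r)"
      by (intro divide_left_mono) auto
    moreover have "\<bar>(-1)^r/(a+t)^(Suc r)\<bar> = 1/(a+t)^(Suc r)"
    proof -
      have "\<bar>(a+t)^(Suc r)\<bar> = (a+t)^(Suc r)" using p by (simp only: abs_of_pos)
      moreover have "\<bar>(-1::real)^r\<bar> = 1" by simp
      ultimately show ?thesis by (simp only: abs_divide)
    qed
    ultimately show ?thesis by simp
  qed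
  have "\<bar>phi r a t\<bar> = fact r * \<bar>1/(a-t)^(Suc r) + (-1)^r/(a+t)^(Suc r)\<bar>"
    unfolding phi_def by (simp add: abs_mult)
  also have "\<dots> \<le> fact r * (1/(a - \<rho>)^(Suc r) + 1/(a - \<rho>)^(Suc r))"
    using 1 2 abs_triangle_ineq[of "1/(a-t)^(Suc r)" "(-1)^r/(a+t)^(Suc r)"]
    by (intro mult_left_mono) auto
  also have "\<dots> = 2 * fact r / (a - \<rho>)^(Suc r)" by simp
  finally show ?thesis .
qed

lemma pow_bound:
  assumes "x \<ge> real i + 1" "0 < r"
  shows "1/x^(Suc r) \<le> 1/(real i + 1)^2"
proof -
  have "(real i + 1)^2 \<le> x^2" using assms by (intro power_mono) auto
  also have "x^2 \<le> x^(Suc r)" using assms by (intro power_increasing) auto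
  finally have le: "(real i + 1)^2 \<le> x^(Suc r)" .
  have "0 < (real i + 1)^2" by simp
  moreover have "0 < x^(Suc r)" using assms by simp
  ultimately show ?thesis using le by (intro divide_left_mono) auto
qed

lemma inv_sq_summable: "summable (\<lambda>i. 1/(real i + 1)^2)"
proof -
  have "summable (\<lambda>n. inverse (real (Suc n) ^ 2))"
    using inverse_power_summable[of 2, where 'a=real] by (subst summable_Suc_iff) simp
  thus ?thesis by (simp add: inverse_eq_divide add.commute)
qed

lemma Wt_bound:
  assumes "0 < r" "\<rho> < 1/2" "\<bar>t\<bar> \<le> \<rho>"
  shows "\<bar>Wt i r t\<bar> \<le> 8 * fact r / (real i + 1)^2"
proof -
  have a1: "ak (2*i+1) - \<rho> \<ge> real i + 1" and a2: "ak (2*i+2) - \<rho> \<ge> real i + 1"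
    using assms unfolding ak_def by auto
  have b1: "\<bar>phi r (ak (2*i+1)) t\<bar> \<le> 2 * fact r / (real i + 1)^2"
  proof -
    have "\<bar>phi r (ak (2*i+1)) t\<bar> \<le> 2 * fact r / (ak (2*i+1) - \<rho>)^(Suc r)"
      using assms a1 by (intro phi_bound) auto
    also have "\<dots> = 2 * fact r * (1/(ak (2*i+1) - \<rho>)^(Suc r))" by simp
    also have "\<dots> \<le> 2 * fact r * (1/(real i + 1)^2)"
      using pow_bound[OF a1 assms(1)] by (intro mult_left_mono) auto
    finally show ?thesis by simp
  qed
  have b2: "\<bar>phi r (ak (2*i+2)) t\<bar> \<le> 2 * fact r / (real i + 1)^2"
  proof -
    have "\<bar>phi r (ak (2*i+2)) t\<bar> \<le> 2 * fact r / (ak (2*i+2) - \<rho>)^(Suc r)"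
      using assms a2 by (intro phi_bound) auto
    also have "\<dots> = 2 * fact r * (1/(ak (2*i+2) - \<rho>)^(Suc r))" by simp
    also have "\<dots> \<le> 2 * fact r * (1/(real i + 1)^2)"
      using pow_bound[OF a2 assms(1)] by (intro mult_left_mono) auto
    finally show ?thesis by simp
  qed
  have A: "\<bar>Af i\<bar> \<le> 2" using Af_pos[of i] Af_le[of i] by simp
  have C: "\<bar>Cf i\<bar> \<le> 2" using Cf_neg[of i] Cf_ge[of i] by simp
  have "\<bar>Wt i r t\<bar> \<le> \<bar>Af i\<bar> * \<bar>phi r (ak (2*i+1)) t\<bar> + \<bar>Cf i\<bar> * \<bar>phi r (ak (2*i+2)) t\<bar>"
    unfolding Wt_def by (metis abs_mult abs_triangle_ineq)
  also have "\<dots> \<le> 2 * (2 * fact r / (real i + 1)^2) + 2 * (2 * fact r / (real i + 1)^2)"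
    using A C b1 b2 by (intro add_mono mult_mono) auto
  also have "\<dots> = 8 * fact r / (real i + 1)^2" by simp
  finally show ?thesis .
qed

definition Wr :: "nat \<Rightarrow> real \<Rightarrow> real" where "Wr r t = (\<Sum>i. Wt i r t)"

lemma Wt0_summable: "summable (\<lambda>i. Wt i 0 (1/4))"
proof -
  have "(\<lambda>i. (1/2 - 1/4)^2 * Lf i + ((1/2 - 1/4)^2)^2 * Wt i 0 (1/2 - 1/4)) sums (ff (1/4) - ff (1/2) - (1/2 - 1/4)^2)"
    by (rule ff_diff_sums) auto
  hence s1: "summable (\<lambda>i. (1/4)^2 * Lf i + ((1/4)^2)^2 * Wt i 0 (1/4))" by (simp add: sums_summable)
  have s2: "summable (\<lambda>i. (1/4)^2 * Lf i)" using Lf_summable by (rule summable_mult)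
  have "summable (\<lambda>i. ((1/4)^2 * Lf i + ((1/4)^2)^2 * Wt i 0 (1/4)) - (1/4)^2 * Lf i)"
    using s1 s2 by (rule summable_diff)
  hence "summable (\<lambda>i. ((1/4::real)^2)^2 * Wt i 0 (1/4))" by simp
  thus ?thesis by (subst (asm) summable_cmult_iff) auto
qed

lemma Wr_props:
  assumes t: "\<bar>t\<bar> < 1/2"
  shows "summable (\<lambda>i. Wt i r t) \<and> (Wr r has_real_derivative Wr (Suc r) t) (at t)"
proof -
  have "summable (\<lambda>i. Wt i r t) \<and> ((\<lambda>t. \<Sum>i. Wt i r t) has_real_derivative (\<Sum>i. Wt i (Suc r) t)) (at t)"
  proof (rule series_deriv_all[where R = "1/2" and tz = "1/4"])
    show "(Wt i r has_real_derivative Wt i (Suc r) t) (at t)" if "\<bar>t\<bar> < 1/2" for i r t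
      using that by (intro Wt_deriv) auto
    show "\<exists>M. summable M \<and> (\<forall>i t. \<bar>t\<bar> \<le> \<rho> \<longrightarrow> \<bar>Wt i r t\<bar> \<le> M i)" if "0 < r" "\<rho> < 1/2" for r \<rho>
    proof (intro exI conjI allI impI)
      show "summable (\<lambda>i. 8 * fact r * (1/(real i + 1)^2))"
        by (intro summable_mult inv_sq_summable)
      show "\<bar>Wt i r t\<bar> \<le> 8 * fact r * (1/(real i + 1)^2)" if "\<bar>t\<bar> \<le> \<rho>" for i t
        using Wt_bound[of r \<rho> t i] that \<open>0 < r\<close> \<open>\<rho> < 1/2\<close> by simp
    qed
    show "\<bar>1/4::real\<bar> < 1/2" by simp
    show "summable (\<lambda>i. Wt i 0 (1/4))" by (rule Wt0_summable)
    show "\<bar>t\<bar> < 1/2" by (rule t)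
  qed
  thus ?thesis unfolding Wr_def[abs_def] by simp
qed



lemma Wr_pos: "0 < t \<Longrightarrow> t < 1/2 \<Longrightarrow> Wr r t > 0"
  unfolding Wr_def using Wr_props[of t r] Wt_pos[of t]
  by (intro suminf_pos) auto

lemma ff_identity:
  assumes x: "0 < x" "x < 1"
  shows "ff x = ff (1/2) + c1 * (1/2 - x)^2 + (1/2 - x)^4 * Wr 0 (1/2 - x)"
proof -
  define t where "t = 1/2 - x"
  have t: "\<bar>t\<bar> < 1/2" using x unfolding t_def by (auto simp: abs_if)
  have S: "(\<lambda>i. t^2 * Lf i + (t^2)^2 * Wt i 0 t) sums (ff x - ff (1/2) - t^2)"
    unfolding t_def by (rule ff_diff_sums[OF x])
  have S1: "(\<lambda>i. t^2 * Lf i) sums (t^2 * suminf Lf)"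
    by (intro sums_mult summable_sums Lf_summable)
  have S2: "(\<lambda>i. (t^2)^2 * Wt i 0 t) sums ((t^2)^2 * Wr 0 t)"
    unfolding Wr_def using Wr_props[OF t, of 0] by (intro sums_mult summable_sums) auto
  from sums_unique2[OF S sums_add[OF S1 S2]]
  have "ff x - ff (1/2) - t^2 = t^2 * suminf Lf + (t^2)^2 * Wr 0 t" .
  thus ?thesis unfolding t_def[symmetric] c1_def by (simp add: algebra_simps flip: power_mult)
qed

lemma ff_half_pos: "ff (1/2) > 0"
proof -
  have B: "Beta (1/2) (1 - 1/2) = pi" using Beta_refl[of "1/2"] by simp
  have R: "RR (1/2) (1 - 1/2) = 4 * ln 2" unfolding RR_def using Digamma_one_half[where 'a=real] by simp
  have "ff (1/2) = 19/16 * pi - 4 * ln 2" unfolding ff_def B R by (simp add: power_divide)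
  thus ?thesis using pi_gt3 ln2_le_25_over_36 by linarith
qed



definition Fd :: "nat \<Rightarrow> real \<Rightarrow> real" where
  "Fd n t = ff (1/2) * dpow 0 n t + c1 * dpow 2 n t + (\<Sum>l\<le>n. real (n choose l) * dpow 4 l t * Wr (n - l) t)"

lemma f_CM: "strictly_completely_monotonic_on {0<..<1/2} ff"
proof (rule CM_from_formula)
  fix x :: real assume x: "0 < x" "x < 1"
  have e: "ff x = ff (1/2) + c1 * (1/2 - x)^2 + (1/2 - x)^4 * Wr 0 (1/2 - x)" by (rule ff_identity[OF x])
  show "ff x = Fd 0 (1/2 - x)" unfolding e Fd_def by simp
next
  fix n and t :: real assume t: "\<bar>t\<bar> < 1/2"
  have W: "\<And>l. (Wr l has_real_derivative Wr (Suc l) t) (at t)" using Wr_props[OF t] by blast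
  have L: "((\<lambda>t. \<Sum>l\<le>n. real (n choose l) * dpow 4 l t * Wr (n - l) t) has_real_derivative
      (\<Sum>l\<le>Suc n. real (Suc n choose l) * dpow 4 l t * Wr (Suc n - l) t)) (at t)"
    by (rule leibniz_deriv[where u = "dpow 4" and v = Wr, OF dpow_deriv W])
  have D0: "((\<lambda>t. ff (1/2) * dpow 0 n t) has_real_derivative ff (1/2) * dpow 0 (Suc n) t) (at t)"
    by (rule DERIV_cmult[OF dpow_deriv])
  have D2: "((\<lambda>t. c1 * dpow 2 n t) has_real_derivative c1 * dpow 2 (Suc n) t) (at t)"
    by (rule DERIV_cmult[OF dpow_deriv])
  have "((\<lambda>t. ff (1/2) * dpow 0 n t + c1 * dpow 2 n t + (\<Sum>l\<le>n. real (n choose l) * dpow 4 l t * Wr (n - l) t))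
     has_real_derivative (ff (1/2) * dpow 0 (Suc n) t + c1 * dpow 2 (Suc n) t
       + (\<Sum>l\<le>Suc n. real (Suc n choose l) * dpow 4 l t * Wr (Suc n - l) t))) (at t)"
    by (rule DERIV_add[OF DERIV_add[OF D0 D2] L])
  thus "(Fd n has_real_derivative Fd (Suc n) t) (at t)" unfolding Fd_def[abs_def] by simp
next
  fix n and t :: real assume t: "0 < t" "t < 1/2"
  have a: "ff (1/2) * dpow 0 n t \<ge> 0" using ff_half_pos dpow_nonneg[of t] t by simp
  have b: "c1 * dpow 2 n t \<ge> 0" using c1_nonneg dpow_nonneg[of t] t by simp
  have nn: "0 \<le> real (n choose l) * dpow 4 l t * Wr (n - l) t" for l
  proof -
    have "0 \<le> dpow 4 l t" using t by (intro dpow_nonneg) auto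
    moreover have "0 \<le> Wr (n - l) t" using Wr_pos[OF t] by (rule less_imp_le)
    ultimately show ?thesis by simp
  qed
  have p0: "0 < real (n choose 0) * dpow 4 0 t * Wr (n - 0) t"
    using Wr_pos[OF t, of n] t by simp
  have "(\<Sum>l\<le>n. real (n choose l) * dpow 4 l t * Wr (n - l) t) > 0"
    by (rule sum_pos2[of "{..n}" 0]) (use nn p0 in auto)
  thus "Fd n t > 0" unfolding Fd_def using a b by linarith
qed

definition gg :: "real \<Rightarrow> real" where
  "gg x = RR x (1 - x) - Beta x (1 - x) / (1 + x * (1 - x))"
definition vv :: "real \<Rightarrow> real" where "vv a = 2*a/(a^2 - 5/4)"
definition wk :: "nat \<Rightarrow> real" where "wk k = 1 + (-1)^k / (ak k^2 - 5/4)"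
definition kap :: "nat \<Rightarrow> real" where "kap i = vv (ak (2*i+1)) - vv (ak (2*i))"
definition qq :: "real \<Rightarrow> real" where "qq t = 1/(5/4 - t^2)"

lemma perk_g_c:
  fixes a D d Q :: real
  assumes "a \<noteq> 0" "D \<noteq> 0" "d \<noteq> 0" "Q \<noteq> 0" "Q = D - d" "a^2 = d + 5/4"
  shows "- ((2*a/D) / Q) + (2/a) / (5/4) = (1/d) * (2*a/D - 2/a) - (2*a/d) * (1/Q - 4/5)"
proof -
  have "(- ((2*a/D) / Q) + (2/a) / (5/4)) * (5*a*D*d*Q) = ((1/d) * (2*a/D - 2/a) - (2*a/d) * (1/Q - 4/5)) * (5*a*D*d*Q)"
    using assms(1-4) apply (simp add: field_simps)
    using assms(5,6) by algebra
  thus ?thesis using assms(1-4) by simp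
qed

lemma lin_c: "d \<noteq> 0 \<Longrightarrow> P + c * ((1/d) * P - (2*a/d) * R) = (1 + c/d) * P - (2*c*a/d) * (R::real)"
  by (simp add: field_simps)

lemma perk_g_s:
  fixes a c s :: real
  assumes "a \<noteq> 0" "a^2 - 5/4 \<noteq> 0" "a^2 - s \<noteq> 0" "5/4 - s \<noteq> 0"
  shows "(2*a/(a^2 - s) - c * (2*a/(a^2 - s)) / (5/4 - s)) - (2/a - c * (2/a) / (5/4))
       = (1 + c/(a^2 - 5/4)) * (2*a/(a^2 - s) - 2/a) - (2*c*a/(a^2 - 5/4)) * (1/(5/4 - s) - 4/5)"
proof -
  define D where "D = a^2 - s"
  define d where "d = a^2 - 5/4"
  define Q where "Q = 5/4 - s"
  have E: "- ((2*a/D) / Q) + (2/a) / (5/4) = (1/d) * (2*a/D - 2/a) - (2*a/d) * (1/Q - 4/5)"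
    using assms by (intro perk_g_c) (auto simp: D_def d_def Q_def)
  have "(2*a/D - c * (2*a/D) / Q) - (2/a - c * (2/a) / (5/4))
      = (2*a/D - 2/a) + c * (- ((2*a/D) / Q) + (2/a) / (5/4))" by (simp add: algebra_simps)
  also have "\<dots> = (1 + c/d) * (2*a/D - 2/a) - (2*c*a/d) * (1/Q - 4/5)"
    unfolding E using assms(2) unfolding d_def[symmetric] by (rule lin_c)
  finally show ?thesis unfolding Q_def D_def d_def .
qed

lemma perk_g:
  fixes a c t :: real
  assumes "a > 0" "a^2 \<noteq> 5/4" "a \<noteq> t" "a \<noteq> -t" "\<bar>t\<bar> < 1"
  shows "(ph a t - c * ph a t / (5/4 - t^2)) - (ph a 0 - c * ph a 0 / (5/4 - 0^2))
       = (1 + c/(a^2 - 5/4)) * (ph a t - 2/a) - (2*c*a/(a^2 - 5/4)) * (qq t - 4/5)"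
proof -
  have "a^2 \<noteq> t^2" using assms by (simp add: power2_eq_iff)
  hence n1: "a^2 - t^2 \<noteq> 0" by simp
  have "t^2 < 1" using assms by (simp add: abs_less_iff power2_eq_square) (smt (verit) mult_less_cancel_left2 mult_minus_left mult_minus_right)
  hence n2: "5/4 - t^2 \<noteq> 0" by simp
  have ph0: "ph a 0 = 2/a" using assms by (simp add: ph_def)
  have pht: "ph a t = 2*a/(a^2 - t^2)" using assms by (intro ph_alt) auto
  show ?thesis unfolding ph0 pht qq_def
    using perk_g_s[of a "t^2" c] assms n1 n2 by simp
qed

definition Tg :: "real \<Rightarrow> nat \<Rightarrow> real" where
  "Tg s i = (ph (ak (2*i)) s - 2/(real (2*i) + 1)) + (ph (ak (2*i+1)) s - 2/(real (2*i+1) + 1))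
          - (ph (ak (2*i)) s - ph (ak (2*i+1)) s) / (5/4 - s^2)"

definition Zt :: "nat \<Rightarrow> nat \<Rightarrow> real \<Rightarrow> real" where
  "Zt i r t = (if r = 0 then wk (2*i) * (ph (ak (2*i)) t - 2/ak (2*i)) + wk (2*i+1) * (ph (ak (2*i+1)) t - 2/ak (2*i+1))
               else wk (2*i) * phi r (ak (2*i)) t + wk (2*i+1) * phi r (ak (2*i+1)) t)"

lemma gg_sums:
  fixes y :: real
  assumes y: "0 < y" "y < 1"
  shows "(\<lambda>i. Tg (1/2 - y) i) sums gg y"
proof -
  have R: "(\<lambda>i. (ph (ak (2*i)) (1/2 - y) - 2/(real (2*i) + 1)) + (ph (ak (2*i+1)) (1/2 - y) - 2/(real (2*i+1) + 1))) sums RR y (1 - y)"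
    using group2[OF R_sums[OF y]] by simp
  have B: "(\<lambda>i. (ph (ak (2*i)) (1/2 - y) - ph (ak (2*i+1)) (1/2 - y)) / (1 + y * (1 - y))) sums (Beta y (1 - y) / (1 + y * (1 - y)))"
    using sums_divide[OF B_sums[OF y]] .
  have q: "1 + y * (1 - y) = 5/4 - (1/2 - y)^2" by (simp add: power2_eq_square algebra_simps)
  from sums_diff[OF R B] show ?thesis unfolding Tg_def gg_def q .
qed

lemma ak_sq: "ak k ^ 2 \<noteq> 5/4"
proof (cases k)
  case 0 then show ?thesis by (simp add: ak_def power2_eq_square)
next
  case (Suc m)
  have "ak k \<ge> 3/2" unfolding ak_def Suc by simp
  hence "ak k ^ 2 \<ge> (3/2)^2" by (intro power_mono) auto
  thus ?thesis by (auto simp: power_divide)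
qed

lemma Tg_diff:
  assumes t: "\<bar>t\<bar> < 1/2"
  shows "Tg t i - Tg 0 i = Zt i 0 t + kap i * (qq t - 4/5)"
proof -
  define a where "a = ak (2*i)"
  define b where "b = ak (2*i+1)"
  have a: "a \<ge> 1/2" "b \<ge> 1/2" unfolding a_def b_def ak_def by auto
  note pa = perk_g[of a t 1] and pb = perk_g[of b t "-1"]
  have ca: "a > 0" "a^2 \<noteq> 5/4" "a \<noteq> t" "a \<noteq> -t" "\<bar>t\<bar> < 1" using a t ak_sq unfolding a_def by auto
  have cb: "b > 0" "b^2 \<noteq> 5/4" "b \<noteq> t" "b \<noteq> -t" "\<bar>t\<bar> < 1" using a t ak_sq unfolding b_def by auto
  have "Tg t i - Tg 0 i = ((ph a t - 1 * ph a t / (5/4 - t^2)) - (ph a 0 - 1 * ph a 0 / (5/4 - 0^2)))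
       + ((ph b t - (-1) * ph b t / (5/4 - t^2)) - (ph b 0 - (-1) * ph b 0 / (5/4 - 0^2)))"
    unfolding Tg_def a_def[symmetric] b_def[symmetric] by (simp add: algebra_simps diff_divide_distrib)
  also have "\<dots> = Zt i 0 t + kap i * (qq t - 4/5)"
    unfolding pa[OF ca] pb[OF cb] Zt_def kap_def wk_def vv_def a_def[symmetric] b_def[symmetric]
    by (simp add: algebra_simps)
  finally show ?thesis .
qed

lemma vv_mono:
  assumes "5/2 \<le> a" "a \<le> b"
  shows "vv b \<le> vv a"
proof -
  have pa: "a^2 - 5/4 > 0" and pb: "b^2 - 5/4 > 0"
  proof -
    have "a^2 \<ge> (5/2)^2" "b^2 \<ge> (5/2)^2" using assms by (intro power_mono; simp)+
    thus "a^2 - 5/4 > 0" "b^2 - 5/4 > 0" by (simp_all add: power_divide)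
  qed
  have "(b - a) * (a * b + 5/4) \<ge> 0" using assms by (intro mult_nonneg_nonneg) auto
  moreover have "2*a*(b^2 - 5/4) - 2*b*(a^2 - 5/4) = 2 * ((b - a) * (a * b + 5/4))"
    by (simp add: field_simps power2_eq_square)
  ultimately have "2*b*(a^2 - 5/4) \<le> 2*a*(b^2 - 5/4)" by linarith
  thus ?thesis unfolding vv_def using pa pb by (simp add: divide_simps)
qed

definition TT :: "nat \<Rightarrow> real" where "TT j = vv (ak (2*j+2))"

lemma TT_tendsto: "TT \<longlonglongrightarrow> 0"
  unfolding TT_def vv_def ak_def by real_asymp

lemma kap_bounds: "- (TT j - TT (Suc j)) \<le> kap (Suc j)" "kap (Suc j) \<le> 0"
proof -
  have a: "5/2 \<le> ak (2*j+2)" "ak (2*j+2) \<le> ak (2*j+3)" "ak (2*j+3) \<le> ak (2*j+4)"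
    unfolding ak_def by auto
  have 1: "vv (ak (2*j+3)) \<le> vv (ak (2*j+2))" using a by (intro vv_mono) auto
  have 2: "vv (ak (2*j+4)) \<le> vv (ak (2*j+3))" using a by (intro vv_mono) auto
  have k: "kap (Suc j) = vv (ak (2*j+3)) - vv (ak (2*j+2))" unfolding kap_def by (simp add: numeral_3_eq_3)
  have e: "2 * Suc j + 2 = 2*j + 4" by simp
  have T: "TT (Suc j) = vv (ak (2*j+4))" unfolding TT_def e ..
  show "- (TT j - TT (Suc j)) \<le> kap (Suc j)" unfolding k T using 2 by (simp add: TT_def)
  show "kap (Suc j) \<le> 0" unfolding k using 1 by simp
qed

lemma TT_tel: "(\<lambda>j. TT j - TT (Suc j)) sums 1"
proof -
  have "TT 0 = 1" unfolding TT_def vv_def ak_def by (simp add: power2_eq_square)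
  thus ?thesis using telescope_sums'[OF TT_tendsto] by simp
qed

lemma kap_summable: "summable kap"
proof -
  have "summable (\<lambda>j. kap (Suc j))"
  proof (rule summable_comparison_test)
    have "norm (kap (Suc n)) \<le> TT n - TT (Suc n)" for n
    proof -
      have "norm (kap (Suc n)) = - kap (Suc n)" using kap_bounds(2)[of n] by simp
      thus ?thesis using kap_bounds(1)[of n] by linarith
    qed
    thus "\<exists>N. \<forall>n\<ge>N. norm (kap (Suc n)) \<le> TT n - TT (Suc n)" by blast
    show "summable (\<lambda>n. TT n - TT (Suc n))" using TT_tel by (rule sums_summable)
  qed
  thus ?thesis by (subst (asm) summable_Suc_iff)
qed

definition KK :: real where "KK = suminf kap"

lemma KK_nonneg: "KK \<ge> 0"
proof -
  have "KK = (\<Sum>j. kap (j + 1)) + (\<Sum>i<1. kap i)" unfolding KK_def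
    by (rule suminf_split_initial_segment[OF kap_summable])
  moreover have "kap 0 = 4" unfolding kap_def vv_def ak_def by (simp add: power2_eq_square)
  moreover have "(\<Sum>j. kap (j + 1)) \<ge> (\<Sum>j. - (TT j - TT (Suc j)))"
  proof (rule suminf_le)
    show "- (TT j - TT (Suc j)) \<le> kap (j + 1)" for j using kap_bounds(1) by simp
    show "summable (\<lambda>j. - (TT j - TT (Suc j)))" using TT_tel by (intro summable_minus sums_summable)
    show "summable (\<lambda>j. kap (j + 1))" using kap_summable by (subst summable_iff_shift)
  qed
  moreover have "(\<Sum>j. - (TT j - TT (Suc j))) = -1" using sums_minus[OF TT_tel] by (simp add: sums_iff)
  ultimately show ?thesis by simp
qed

lemma wk_01: "wk 0 = 0" "wk 1 = 0"
  unfolding wk_def ak_def by (simp_all add: power2_eq_square)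

lemma wk_big: assumes "k \<ge> 2" shows "wk k > 0" "wk k \<le> 2"
proof -
  have "ak k \<ge> 5/2" using assms unfolding ak_def by simp
  hence "ak k ^ 2 \<ge> (5/2)^2" by (intro power_mono) auto
  hence d: "ak k ^ 2 - 5/4 \<ge> 5" by (simp add: power_divide)
  define X where "X = (-1)^k / (ak k ^ 2 - 5/4)"
  have "\<bar>X\<bar> = 1 / (ak k ^ 2 - 5/4)" using d unfolding X_def by (simp add: abs_divide)
  moreover have "1 / (ak k ^ 2 - 5/4) \<le> 1/5" using d by (intro divide_left_mono) auto
  ultimately have "\<bar>X\<bar> \<le> 1/5" by simp
  hence "X \<le> 1/5" "- X \<le> 1/5" by (simp_all only: abs_le_iff)
  moreover have "wk k = 1 + X" unfolding wk_def X_def ..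
  ultimately show "wk k > 0" "wk k \<le> 2" by linarith+
qed

lemma wk_nonneg: "wk k \<ge> 0"
  using wk_01 wk_big[of k] by (cases "k \<ge> 2") (auto simp: not_le less_2_cases_iff)

lemma wk_le: "wk k \<le> 2"
  using wk_01 wk_big[of k] by (cases "k \<ge> 2") (auto simp: not_le less_2_cases_iff)

lemma Zt_deriv:
  assumes t: "\<bar>t\<bar> < 1/2"
  shows "(Zt i r has_real_derivative Zt i (Suc r) t) (at t)"
proof -
  have a: "ak (2*i) \<ge> 1/2" "ak (2*i+1) \<ge> 1/2" unfolding ak_def by auto
  have d: "(phi r (ak k) has_real_derivative phi (Suc r) (ak k) t) (at t)" if "ak k \<ge> 1/2" for k r
    using that t by (intro phi_deriv) auto
  show ?thesis
  proof (cases "r = 0")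
    case True
    have e: "Zt i r = (\<lambda>t. wk (2*i) * (phi 0 (ak (2*i)) t - 2/ak (2*i)) + wk (2*i+1) * (phi 0 (ak (2*i+1)) t - 2/ak (2*i+1)))"
      unfolding True by (simp add: Zt_def phi_0 fun_eq_iff)
    have "((\<lambda>t. wk (2*i) * (phi 0 (ak (2*i)) t - 2/ak (2*i)) + wk (2*i+1) * (phi 0 (ak (2*i+1)) t - 2/ak (2*i+1)))
       has_real_derivative wk (2*i) * (phi 1 (ak (2*i)) t - 0) + wk (2*i+1) * (phi 1 (ak (2*i+1)) t - 0)) (at t)"
      using d[OF a(1), of 0] d[OF a(2), of 0] by (intro DERIV_add DERIV_cmult DERIV_diff DERIV_const) auto
    thus ?thesis unfolding e using True by (simp add: Zt_def)
  next
    case False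
    have e: "Zt i r = (\<lambda>t. wk (2*i) * phi r (ak (2*i)) t + wk (2*i+1) * phi r (ak (2*i+1)) t)"
      using False by (simp add: Zt_def fun_eq_iff)
    have "((\<lambda>t. wk (2*i) * phi r (ak (2*i)) t + wk (2*i+1) * phi r (ak (2*i+1)) t)
       has_real_derivative wk (2*i) * phi (Suc r) (ak (2*i)) t + wk (2*i+1) * phi (Suc r) (ak (2*i+1)) t) (at t)"
      using d[OF a(1), of r] d[OF a(2), of r] by (intro DERIV_add DERIV_cmult) auto
    thus ?thesis unfolding e by (simp add: Zt_def)
  qed
qed

lemma Zt_bound:
  assumes "0 < r" "\<rho> < 1/2" "\<bar>t\<bar> \<le> \<rho>"
  shows "\<bar>Zt i r t\<bar> \<le> 8 * fact r / (real i + 1)^2"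
proof (cases "i = 0")
  case True
  thus ?thesis using assms wk_01 by (simp add: Zt_def)
next
  case False
  have a1: "ak (2*i) - \<rho> \<ge> real i + 1" and a2: "ak (2*i+1) - \<rho> \<ge> real i + 1"
    using assms False unfolding ak_def by auto
  have b: "\<bar>phi r (ak k) t\<bar> \<le> 2 * fact r / (real i + 1)^2" if "ak k - \<rho> \<ge> real i + 1" for k
  proof -
    have "\<bar>phi r (ak k) t\<bar> \<le> 2 * fact r / (ak k - \<rho>)^(Suc r)"
      using assms that by (intro phi_bound) auto
    also have "\<dots> = 2 * fact r * (1/(ak k - \<rho>)^(Suc r))" by simp
    also have "\<dots> \<le> 2 * fact r * (1/(real i + 1)^2)"
      using pow_bound[OF that assms(1)] by (intro mult_left_mono) auto
    finally show ?thesis by simp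
  qed
  have "\<bar>Zt i r t\<bar> \<le> \<bar>wk (2*i)\<bar> * \<bar>phi r (ak (2*i)) t\<bar> + \<bar>wk (2*i+1)\<bar> * \<bar>phi r (ak (2*i+1)) t\<bar>"
    using assms(1) unfolding Zt_def by (simp add: abs_mult[symmetric] abs_triangle_ineq)
  also have "\<dots> \<le> 2 * (2 * fact r / (real i + 1)^2) + 2 * (2 * fact r / (real i + 1)^2)"
    using wk_nonneg wk_le b[OF a1] b[OF a2] by (intro add_mono mult_mono) auto
  also have "\<dots> = 8 * fact r / (real i + 1)^2" by simp
  finally show ?thesis .
qed

lemma ph_minus_pos:
  assumes "0 < t" "t < a"
  shows "ph a t - 2/a > 0"
proof -
  have e: "ph a t = 2*a/(a^2 - t^2)" using assms by (intro ph_alt) auto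
  have D: "0 < a^2 - t^2" "a^2 - t^2 < a^2"
    using assms by (auto simp: power2_eq_square intro: mult_strict_mono)
  have "2*a/a^2 < 2*a/(a^2 - t^2)"
    using D assms by (intro divide_strict_left_mono) auto
  moreover have "2*a/a^2 = 2/a" using assms by (simp add: power2_eq_square)
  ultimately show ?thesis unfolding e by simp
qed

lemma Zt_nonneg:
  assumes "0 < t" "t < 1/2"
  shows "Zt i r t \<ge> 0"
proof -
  have a: "t < ak (2*i)" "t < ak (2*i+1)" using assms unfolding ak_def by auto
  show ?thesis
  proof (cases "r = 0")
    case True
    have "ph (ak (2*i)) t - 2/ak (2*i) > 0" "ph (ak (2*i+1)) t - 2/ak (2*i+1) > 0"
      using a assms by (intro ph_minus_pos; simp)+
    thus ?thesis using True wk_nonneg by (simp add: Zt_def)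
  next
    case False
    have "phi r (ak (2*i)) t \<ge> 0" "phi r (ak (2*i+1)) t \<ge> 0"
      using a assms by (intro phi_nonneg; simp)+
    thus ?thesis using False wk_nonneg by (simp add: Zt_def)
  qed
qed

lemma Zt1_pos:
  assumes "0 < t" "t < 1/2"
  shows "Zt 1 r t > 0"
proof -
  have a: "t < ak 2" "t < ak 3" using assms unfolding ak_def by auto
  have w: "wk 2 > 0" "wk 3 \<ge> 0" using wk_big[of 2] wk_nonneg by auto
  show ?thesis
  proof (cases "r = 0")
    case True
    have "ph (ak 2) t - 2/ak 2 > 0" "ph (ak 3) t - 2/ak 3 > 0"
      using a assms by (intro ph_minus_pos; simp)+
    thus ?thesis using True w by (simp add: Zt_def add_pos_nonneg)
  next
    case False
    have "phi r (ak 2) t > 0" "phi r (ak 3) t \<ge> 0"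
      using a assms by (auto intro: phi_pos phi_nonneg)
    thus ?thesis using False w by (simp add: Zt_def add_pos_nonneg)
  qed
qed

lemma gg_diff_sums:
  fixes x :: real
  assumes x: "0 < x" "x < 1"
  shows "(\<lambda>i. Zt i 0 (1/2 - x) + kap i * (qq (1/2 - x) - 4/5)) sums (gg x - gg (1/2))"
proof -
  have t: "\<bar>1/2 - x\<bar> < 1/2" using x by (auto simp: abs_if)
  have S1: "(\<lambda>i. Tg (1/2 - x) i) sums gg x" by (rule gg_sums[OF x])
  have S2: "(\<lambda>i. Tg 0 i) sums gg (1/2)" using gg_sums[of "1/2"] by simp
  from sums_diff[OF S1 S2] show ?thesis unfolding Tg_diff[OF t] .
qed

lemma Zt0_summable: "summable (\<lambda>i. Zt i 0 (1/4))"
proof -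
  have "(\<lambda>i. Zt i 0 (1/2 - 1/4) + kap i * (qq (1/2 - 1/4) - 4/5)) sums (gg (1/4) - gg (1/2))"
    by (rule gg_diff_sums) auto
  hence s1: "summable (\<lambda>i. Zt i 0 (1/4) + kap i * (qq (1/4) - 4/5))" by (simp add: sums_summable)
  have s2: "summable (\<lambda>i. kap i * (qq (1/4) - 4/5))" using kap_summable by (rule summable_mult2)
  have "summable (\<lambda>i. (Zt i 0 (1/4) + kap i * (qq (1/4) - 4/5)) - kap i * (qq (1/4) - 4/5))"
    using s1 s2 by (rule summable_diff)
  thus ?thesis by simp
qed

definition Zr :: "nat \<Rightarrow> real \<Rightarrow> real" where "Zr r t = (\<Sum>i. Zt i r t)"

lemma Zr_props:
  assumes t: "\<bar>t\<bar> < 1/2"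
  shows "summable (\<lambda>i. Zt i r t) \<and> (Zr r has_real_derivative Zr (Suc r) t) (at t)"
proof -
  have "summable (\<lambda>i. Zt i r t) \<and> ((\<lambda>t. \<Sum>i. Zt i r t) has_real_derivative (\<Sum>i. Zt i (Suc r) t)) (at t)"
  proof (rule series_deriv_all[where R = "1/2" and tz = "1/4"])
    show "(Zt i r has_real_derivative Zt i (Suc r) t) (at t)" if "\<bar>t\<bar> < 1/2" for i r t
      using that by (rule Zt_deriv)
    show "\<exists>M. summable M \<and> (\<forall>i t. \<bar>t\<bar> \<le> \<rho> \<longrightarrow> \<bar>Zt i r t\<bar> \<le> M i)" if "0 < r" "\<rho> < 1/2" for r \<rho>
    proof (intro exI conjI allI impI)
      show "summable (\<lambda>i. 8 * fact r * (1/(real i + 1)^2))"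
        by (intro summable_mult inv_sq_summable)
      show "\<bar>Zt i r t\<bar> \<le> 8 * fact r * (1/(real i + 1)^2)" if "\<bar>t\<bar> \<le> \<rho>" for i t
        using Zt_bound[of r \<rho> t i] that \<open>0 < r\<close> \<open>\<rho> < 1/2\<close> by simp
    qed
    show "\<bar>1/4::real\<bar> < 1/2" by simp
    show "summable (\<lambda>i. Zt i 0 (1/4))" by (rule Zt0_summable)
    show "\<bar>t\<bar> < 1/2" by (rule t)
  qed
  thus ?thesis unfolding Zr_def[abs_def] by simp
qed

lemma Zr_pos: "0 < t \<Longrightarrow> t < 1/2 \<Longrightarrow> Zr r t > 0"
  unfolding Zr_def using Zr_props[of t r] Zt_nonneg[of t] Zt1_pos[of t r]
  by (intro suminf_pos2[where i = 1]) auto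

lemma gg_identity:
  assumes x: "0 < x" "x < 1"
  shows "gg x = gg (1/2) + KK * (qq (1/2 - x) - 4/5) + Zr 0 (1/2 - x)"
proof -
  define t where "t = 1/2 - x"
  have t: "\<bar>t\<bar> < 1/2" using x unfolding t_def by (auto simp: abs_if)
  have S: "(\<lambda>i. Zt i 0 t + kap i * (qq t - 4/5)) sums (gg x - gg (1/2))"
    unfolding t_def by (rule gg_diff_sums[OF x])
  have S1: "(\<lambda>i. Zt i 0 t) sums Zr 0 t" unfolding Zr_def using Zr_props[OF t, of 0] by (simp add: summable_sums)
  have S2: "(\<lambda>i. kap i * (qq t - 4/5)) sums (KK * (qq t - 4/5))"
    unfolding KK_def by (intro sums_mult2 summable_sums kap_summable)
  from sums_unique2[OF S sums_add[OF S1 S2]]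
  show ?thesis unfolding t_def[symmetric] by simp
qed

lemma gg_half_pos: "gg (1/2) > 0"
proof -
  have B: "Beta (1/2) (1 - 1/2) = pi" using Beta_refl[of "1/2"] by simp
  have R: "RR (1/2) (1 - 1/2) = 4 * ln 2" unfolding RR_def using Digamma_one_half[where 'a=real] by simp
  have "gg (1/2) = 4 * ln 2 - 4/5 * pi" unfolding gg_def B R by simp
  moreover have "pi < 16/5" using pi_approx(2) by simp
  ultimately show ?thesis using ln2_ge_two_thirds by linarith
qed

definition bb :: real where "bb = sqrt 5 / 2"

lemma bb: "bb > 1/2" "bb^2 = 5/4"
proof -
  have "sqrt 5 > sqrt 1" by (intro real_sqrt_less_mono) simp
  thus "bb > 1/2" unfolding bb_def by simp
  show "bb^2 = 5/4" unfolding bb_def by (simp add: power_divide)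
qed

lemma qq_phi: "\<bar>t\<bar> < 1/2 \<Longrightarrow> qq t = phi 0 bb t / (2 * bb)"
proof -
  assume t: "\<bar>t\<bar> < 1/2"
  have "bb \<noteq> t" "bb \<noteq> -t" using t bb by auto
  hence "phi 0 bb t = 2*bb/(bb^2 - t^2)" unfolding phi_0 by (rule ph_alt)
  thus ?thesis unfolding qq_def bb(2) using bb by simp
qed

definition Gd :: "nat \<Rightarrow> real \<Rightarrow> real" where
  "Gd n t = gg (1/2) * dpow 0 n t + KK * (phi n bb t / (2 * bb) - 4/5 * dpow 0 n t) + Zr n t"

lemma g_CM: "strictly_completely_monotonic_on {0<..<1/2} gg"
proof (rule CM_from_formula)
  fix x :: real assume x: "0 < x" "x < 1"
  have t: "\<bar>1/2 - x\<bar> < 1/2" using x by (auto simp: abs_if)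
  have e: "gg x = gg (1/2) + KK * (qq (1/2 - x) - 4/5) + Zr 0 (1/2 - x)" by (rule gg_identity[OF x])
  show "gg x = Gd 0 (1/2 - x)" unfolding e Gd_def qq_phi[OF t] by simp
next
  fix n and t :: real assume t: "\<bar>t\<bar> < 1/2"
  have Z: "(Zr n has_real_derivative Zr (Suc n) t) (at t)" using Zr_props[OF t] by blast
  have P: "(phi n bb has_real_derivative phi (Suc n) bb t) (at t)" using t bb by (intro phi_deriv) auto
  have D0: "(dpow 0 n has_real_derivative dpow 0 (Suc n) t) (at t)" by (rule dpow_deriv)
  have "((\<lambda>t. gg (1/2) * dpow 0 n t + KK * (phi n bb t / (2 * bb) - 4/5 * dpow 0 n t) + Zr n t)
     has_real_derivative (gg (1/2) * dpow 0 (Suc n) t + KK * (phi (Suc n) bb t / (2 * bb) - 4/5 * dpow 0 (Suc n) t) + Zr (Suc n) t)) (at t)"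
    by (intro DERIV_add DERIV_cmult DERIV_diff DERIV_cdivide P D0 Z)
  thus "(Gd n has_real_derivative Gd (Suc n) t) (at t)" unfolding Gd_def[abs_def] by simp
next
  fix n and t :: real assume t: "0 < t" "t < 1/2"
  have t': "\<bar>t\<bar> < 1/2" using t by simp
  have Z: "Zr n t > 0" using Zr_pos t by simp
  have "gg (1/2) * dpow 0 n t + KK * (phi n bb t / (2 * bb) - 4/5 * dpow 0 n t) \<ge> 0"
  proof (cases n)
    case 0
    have "qq t \<ge> 4/5"
    proof -
      have "t^2 \<le> (1/2)^2" using t by (intro power_mono) auto
      hence "5/4 - t^2 \<le> 5/4" "0 < 5/4 - t^2" by (auto simp: power_divide)
      hence "1/(5/4) \<le> 1/(5/4 - t^2)" by (intro divide_left_mono) auto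
      thus ?thesis unfolding qq_def by simp
    qed
    hence "KK * (qq t - 4/5) \<ge> 0" using KK_nonneg by simp
    thus ?thesis using 0 gg_half_pos qq_phi[OF t'] by simp
  next
    case (Suc m)
    have "phi n bb t \<ge> 0" using t bb by (intro phi_nonneg) auto
    hence "KK * (phi n bb t / (2 * bb)) \<ge> 0" using KK_nonneg bb by simp
    thus ?thesis using Suc by (simp add: dpow_def)
  qed
  thus "Gd n t > 0" unfolding Gd_def using Z by linarith
qed

theorem proposition4:
  shows "strictly_completely_monotonic_on {0<..<1/2}
           (\<lambda>x::real. (1 + x * (1 - x) - (x * (1 - x))^2) * Beta x (1 - x) - RR x (1 - x)) \<and>
         strictly_completely_monotonic_on {0<..<1/2}
           (\<lambda>x::real. RR x (1 - x) - Beta x (1 - x) / (1 + x * (1 - x)))"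
proof -
  have e1: "(\<lambda>x::real. (1 + x * (1 - x) - (x * (1 - x))^2) * Beta x (1 - x) - RR x (1 - x)) = ff"
    by (rule ext) (simp only: ff_def)
  have e2: "(\<lambda>x::real. RR x (1 - x) - Beta x (1 - x) / (1 + x * (1 - x))) = gg"
    by (rule ext) (simp only: gg_def)
  show ?thesis unfolding e1 e2 using f_CM g_CM by blast
qed

end
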